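(* Let $\mu\in\mathcal P_{\nu^t}(nl+|\nu|)$ and let $\widehat{\mathbf V}^\nu=\bigoplus_{i\in\mathbb{Z}}\mathbf W^\mu_i$ be the (unique) $\mu$-grading, with Poincaré polynomial $P_\mu=\sum_i\dim\mathbf W^\mu_i\,t^i$. Then $P_\mu=\mathrm{Res}_{\mu^t}(t)=\sum_{\square\in\mu^t}t^{c(\square)}$. Moreover, the function $\mathcal X_\theta(n\delta+\mathbf d_\nu)^{\mathbb{C}^*}\to\mathbb{Z}[t,t^{-1}]$, $[\mathbf A(\mu)]\mapsto P_\mu$, is injective.
   Context: Assume $l>1$. Fix an $l$-core $\nu$ with $\mathbf d_\nu=(d_0,\dots,d_{l-1})$, where $d_i$ is the number of cells of content $\equiv i\bmod l$ (content $c(i,j)=j-i$). $\widehat{\mathbf V}^\nu=\bigoplus_{i\in\mathbb{Z}/l\mathbb{Z}}\mathbf V_i^\nu$ with $\dim\mathbf V_i^\nu=n+d_i$, and $\mathbf V_\infty=\mathbb{C}v_\infty$. $\theta\in\mathbb{Q}^l$ is such that $\mathcal X_\theta(n\delta+\mathbf d_\nu)$ is smooth. Here $\mathcal X_\theta(\mathbf d)=\mathrm{Spec}\,\mathbb{C}[\mu_{\mathbf d}^{-1}(\theta)]^{\prod GL(\mathbf V_i)}$ for the moment map $[\mathbf X,\mathbf Y]+JI$ on quadruples ($X_i:\mathbf V_i\to\mathbf V_{i+1}$, $Y_i:\mathbf V_i\to\mathbf V_{i-1}$, $I:\mathbf V_0\to\mathbf V_\infty$, $J:\mathbf V_\infty\to\mathbf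 V_0$), with $\mathbb{C}^*$ acting by $(t^{-1}\mathbf X,t\mathbf Y,I,J)$. For $\mu\in\mathcal P_{\nu^t}(nl+|\nu|)$ (partitions with $l$-core $\nu^t$) with Frobenius form $(a_1..a_k\mid b_1..b_k)$, put $r_i=b_i+1$, $m_i=a_i+b_i+1$, $q_i=\sum_{s<i}m_s+r_i$, and $\beta_i=\theta_0+\sum_{s=1}^{r_i-1}\theta_{r_i-s}+\sum_{s=0}^{m_i-r_i-1}\theta_{-m_i+r_i+s}$. $\Lambda(m)$ has ones at $(j,j+1)$. $A(m,r)_{j+1,j}=\sum_{s=1}^j\theta_{r-s}$ ($j<r$) or $-\sum_{s=0}^{m-j-1}\theta_{-m+r+s}$ ($r\le j<m$), zero elsewhere. $A(\mu)$ has diagonal blocks $A(m_i,r_i)$, and its off-diagonal $(i,j)$ blocks are the unique $M$ supported on positions $(s,t)$ with $t-s=r_j-r_i-1$ and satisfying $\Lambda(m_i)M-M\Lambda(m_j)=-\beta_iE(r_i,r_j)$. $\Lambda(\mu)=\mathrm{diag}(\Lambda(m_i))$. $I(\mu)$ has ones in columns $q_i$, and $J(\mu)$ has $\beta_i$ in rows $q_i$. All are taken in the basis $\mathsf{Bas}(j)=v_{\psi(j)}^{\omega(j)}$. Here $(u_j)$ is the sequence $(1..m_1,\dots,1..m_k)$; $\zeta(j)$ is the block index; $\psi(j)=(r_{\zeta(j)}-u_j)\bmod l$; $\omega(j)=\#\{j'\le j:\psi(j')=\psi(j)\}$; and $(v_i^e)$ is a basis of $\mathbf V_i^\nu$. $\mathbf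 A(\mu)=(\Lambda(\mu),A(\mu),I(\mu),J(\mu))$ with $X_i=\Lambda(\mu)|_{\mathbf V_i^\nu}$ and $Y_i=A(\mu)|_{\mathbf V_i^\nu}$. The paper shows that $\mu\mapsto[\mathbf A(\mu)]=G.\mathbf A(\mu)$ is a bijection $\mathcal P_{\nu^t}(nl+|\nu|)\to\mathcal X_\theta(n\delta+\mathbf d_\nu)^{\mathbb{C}^*}$. A $\mu$-grading is a $\mathbb{Z}$-grading $\widehat{\mathbf V}^\nu=\bigoplus_{i\in\mathbb{Z}}\mathbf W_i$ with $A(\mu)\mathbf W_i\subseteq\mathbf W_{i-1}$, $\Lambda(\mu)\mathbf W_i\subseteq\mathbf W_{i+1}$, $J(\mu)\mathbf V_\infty\subseteq\mathbf W_0$, and $I(\mu)\mathbf W_0=\mathbf V_\infty$. The paper shows that a $\mu$-grading exists and is unique. *)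

theory Defs
  imports "HOL-Library.Function_Algebras" "HOL-Computational_Algebra.Formal_Laurent_Series"
begin

text \<open>A partition is represented by its Young diagram: a finite down-closed set of cells
  (i,j) (row i, column j, both 0-based). Content c(i,j) = j - i.\<close>

definition young :: "(nat \<times> nat) set \<Rightarrow> bool" where
  "young Y \<longleftrightarrow> finite Y \<and>
     (\<forall>i j i' j'. (i, j) \<in> Y \<longrightarrow> i' \<le> i \<longrightarrow> j' \<le> j \<longrightarrow> (i', j') \<in> Y)"

definition transp_diag :: "(nat \<times> nat) set \<Rightarrow> (nat \<times> nat) set" where
  "transp_diag Y = (\<lambda>(i, j). (j, i)) ` Y"

definition content :: "nat \<times> nat \<Rightarrow> int" where
  "content c = int (snd c) - int (fst c)"

definition cell_adj :: "nat \<times> nat \<Rightarrow> nat \<times> nat \<Rightarrow> bool" where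
  "cell_adj a b \<longleftrightarrow> (fst a = fst b \<and> (snd b = snd a + 1 \<or> snd a = snd b + 1)) \<or>
                      (snd a = snd b \<and> (fst b = fst a + 1 \<or> fst a = fst b + 1))"

definition cells_connected :: "(nat \<times> nat) set \<Rightarrow> bool" where
  "cells_connected S \<longleftrightarrow>
     (\<forall>a\<in>S. \<forall>b\<in>S. (a, b) \<in> {(x, y). x \<in> S \<and> y \<in> S \<and> cell_adj x y}\<^sup>*)"

definition rim_hook_removal :: "nat \<Rightarrow> (nat \<times> nat) set \<Rightarrow> (nat \<times> nat) set \<Rightarrow> bool" where
  "rim_hook_removal l Y Z \<longleftrightarrow> young Y \<and> young Z \<and> Z \<subseteq> Y \<and> card (Y - Z) = l \<and>
     cells_connected (Y - Z) \<and>
     \<not> (\<exists>i j. {(i, j), (i + 1, j), (i, j + 1), (i + 1, j + 1)} \<subseteq> Y - Z)"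

definition is_core :: "nat \<Rightarrow> (nat \<times> nat) set \<Rightarrow> bool" where
  "is_core l Y \<longleftrightarrow> young Y \<and> \<not> (\<exists>Z. rim_hook_removal l Y Z)"

definition has_core :: "nat \<Rightarrow> (nat \<times> nat) set \<Rightarrow> (nat \<times> nat) set \<Rightarrow> bool" where
  "has_core l Y C \<longleftrightarrow> young Y \<and> (rim_hook_removal l)\<^sup>*\<^sup>* Y C \<and> is_core l C"

definition partitions_with_core :: "nat \<Rightarrow> (nat \<times> nat) set \<Rightarrow> nat \<Rightarrow> (nat \<times> nat) set set" where
  "partitions_with_core l C N = {Y. young Y \<and> card Y = N \<and> has_core l Y C}"

definition dvec :: "nat \<Rightarrow> (nat \<times> nat) set \<Rightarrow> nat \<Rightarrow> nat" where
  "dvec l Y i = card {c \<in> Y. content c mod int l = int i}"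

definition Res :: "(nat \<times> nat) set \<Rightarrow> int fls" where
  "Res Y = (\<Sum>c\<in>Y. fls_X_intpow (content c))"

text \<open>Positive roots of affine type A_(l-1) (l > 1), written as cyclic intervals:
  the root starting at i of length L has k-th coordinate #{s < L. (i+s) mod l = k}.\<close>
definition cyc_root :: "nat \<Rightarrow> nat \<Rightarrow> nat \<Rightarrow> nat \<Rightarrow> nat" where
  "cyc_root l i L k = card {s. s < L \<and> (i + s) mod l = k}"

definition theta_generic :: "nat \<Rightarrow> (nat \<Rightarrow> rat) \<Rightarrow> (nat \<Rightarrow> nat) \<Rightarrow> bool" where
  "theta_generic l \<theta> v \<longleftrightarrow>
     (\<forall>i<l. \<forall>L\<ge>1. (\<forall>k<l. cyc_root l i L k \<le> v k) \<longrightarrow>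
        (\<Sum>k<l. \<theta> k * of_nat (cyc_root l i L k)) \<noteq> 0)"

text \<open>Indices in Z/lZ: theta_k for integer k means theta_(k mod l).\<close>
definition th :: "nat \<Rightarrow> (nat \<Rightarrow> rat) \<Rightarrow> int \<Rightarrow> complex" where
  "th l \<theta> k = of_rat (\<theta> (nat (k mod int l)))"

text \<open>Frobenius form (a_1..a_k | b_1..b_k); blocks are indexed b = 0..k-1.\<close>
definition frob_k :: "(nat \<times> nat) set \<Rightarrow> nat" where
  "frob_k Y = card {i. (i, i) \<in> Y}"

definition frob_a :: "(nat \<times> nat) set \<Rightarrow> nat \<Rightarrow> nat" where
  "frob_a Y b = card {j. (b, j) \<in> Y} - b - 1"

definition frob_b :: "(nat \<times> nat) set \<Rightarrow> nat \<Rightarrow> nat" where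
  "frob_b Y b = card {i. (i, b) \<in> Y} - b - 1"

definition rr :: "(nat \<times> nat) set \<Rightarrow> nat \<Rightarrow> nat" where
  "rr Y b = frob_b Y b + 1"

definition mm :: "(nat \<times> nat) set \<Rightarrow> nat \<Rightarrow> nat" where
  "mm Y b = frob_a Y b + frob_b Y b + 1"

definition offs :: "(nat \<times> nat) set \<Rightarrow> nat \<Rightarrow> nat" where
  "offs Y b = (\<Sum>s<b. mm Y s)"

text \<open>Global positions p = 0..N-1 (0-based); block zeta(p) and local 1-based index u_p.\<close>
definition blk :: "(nat \<times> nat) set \<Rightarrow> nat \<Rightarrow> nat" where
  "blk Y p = (THE b. b < frob_k Y \<and> offs Y b \<le> p \<and> p < offs Y b + mm Y b)"

definition loc :: "(nat \<times> nat) set \<Rightarrow> nat \<Rightarrow> nat" where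
  "loc Y p = p - offs Y (blk Y p) + 1"

definition beta :: "nat \<Rightarrow> (nat \<Rightarrow> rat) \<Rightarrow> (nat \<times> nat) set \<Rightarrow> nat \<Rightarrow> complex" where
  "beta l \<theta> Y b = th l \<theta> 0
      + (\<Sum>s\<in>{1..<rr Y b}. th l \<theta> (int (rr Y b) - int s))
      + (\<Sum>s\<in>{0..<mm Y b - rr Y b}. th l \<theta> (- int (mm Y b) + int (rr Y b) + int s))"

text \<open>A(m,r), 1-based entries: A_(j+1,j) for 1 \<le> j < m.\<close>
definition Aloc :: "nat \<Rightarrow> (nat \<Rightarrow> rat) \<Rightarrow> nat \<Rightarrow> nat \<Rightarrow> nat \<Rightarrow> nat \<Rightarrow> complex" where
  "Aloc l \<theta> m r s t =
     (if s = t + 1 \<and> 1 \<le> t \<and> t < m then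
        (if t < r then (\<Sum>x\<in>{1..t}. th l \<theta> (int r - int x))
         else - (\<Sum>x\<in>{0..<m - t}. th l \<theta> (- int m + int r + int x)))
      else 0)"

text \<open>Off-diagonal block (b,c): the unique m_b x m_c matrix M (1-based entries, zero outside
  the range) supported on t - s = r_c - r_b - 1 with Lambda(m_b) M - M Lambda(m_c) = -beta_b E(r_b,r_c).\<close>
definition offblk :: "nat \<Rightarrow> (nat \<Rightarrow> rat) \<Rightarrow> (nat \<times> nat) set \<Rightarrow> nat \<Rightarrow> nat \<Rightarrow> nat \<Rightarrow> nat \<Rightarrow> complex" where
  "offblk l \<theta> Y b c = (THE M :: nat \<Rightarrow> nat \<Rightarrow> complex.
     (\<forall>s t. M s t \<noteq> 0 \<longrightarrow> 1 \<le> s \<and> s \<le> mm Y b \<and> 1 \<le> t \<and> t \<le> mm Y c \<and>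
                           int t - int s = int (rr Y c) - int (rr Y b) - 1) \<and>
     (\<forall>s t. 1 \<le> s \<longrightarrow> s \<le> mm Y b \<longrightarrow> 1 \<le> t \<longrightarrow> t \<le> mm Y c \<longrightarrow>
        (if s < mm Y b then M (s + 1) t else 0) - (if 1 < t then M s (t - 1) else 0)
          = (if s = rr Y b \<and> t = rr Y c then - beta l \<theta> Y b else 0)))"

text \<open>Global N x N matrices, 0-based positions.\<close>
definition Amat :: "nat \<Rightarrow> (nat \<Rightarrow> rat) \<Rightarrow> (nat \<times> nat) set \<Rightarrow> nat \<Rightarrow> nat \<Rightarrow> complex" where
  "Amat l \<theta> Y p q =
     (if blk Y p = blk Y q then Aloc l \<theta> (mm Y (blk Y p)) (rr Y (blk Y p)) (loc Y p) (loc Y q)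
      else offblk l \<theta> Y (blk Y p) (blk Y q) (loc Y p) (loc Y q))"

definition Lmat :: "(nat \<times> nat) set \<Rightarrow> nat \<Rightarrow> nat \<Rightarrow> complex" where
  "Lmat Y p q = (if blk Y p = blk Y q \<and> loc Y q = loc Y p + 1 then 1 else 0)"

text \<open>I(mu): row vector with ones in columns q_b; J(mu): column vector with beta_b in rows q_b
  (q_b 1-based = offs b + r_b, i.e. 0-based position offs b + r_b - 1).\<close>
definition Ivec :: "(nat \<times> nat) set \<Rightarrow> nat \<Rightarrow> complex" where
  "Ivec Y p = (if \<exists>b < frob_k Y. p = offs Y b + rr Y b - 1 then 1 else 0)"

definition Jvec :: "nat \<Rightarrow> (nat \<Rightarrow> rat) \<Rightarrow> (nat \<times> nat) set \<Rightarrow> nat \<Rightarrow> complex" where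
  "Jvec l \<theta> Y p = (if \<exists>b < frob_k Y. p = offs Y b + rr Y b - 1
                     then beta l \<theta> Y (THE b. b < frob_k Y \<and> p = offs Y b + rr Y b - 1) else 0)"

definition cscale :: "complex \<Rightarrow> (nat \<Rightarrow> complex) \<Rightarrow> (nat \<Rightarrow> complex)" where
  "cscale c v = (\<lambda>p. c * v p)"

definition Vsp :: "nat \<Rightarrow> (nat \<Rightarrow> complex) set" where
  "Vsp N = {v. \<forall>p\<ge>N. v p = 0}"

definition mat_app :: "nat \<Rightarrow> (nat \<Rightarrow> nat \<Rightarrow> complex) \<Rightarrow> (nat \<Rightarrow> complex) \<Rightarrow> (nat \<Rightarrow> complex)" where
  "mat_app N M v = (\<lambda>p. if p < N then (\<Sum>q<N. M p q * v q) else 0)"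

definition row_app :: "nat \<Rightarrow> (nat \<Rightarrow> complex) \<Rightarrow> (nat \<Rightarrow> complex) \<Rightarrow> complex" where
  "row_app N r v = (\<Sum>q<N. r q * v q)"

definition is_mu_grading :: "nat \<Rightarrow> (nat \<Rightarrow> rat) \<Rightarrow> (nat \<times> nat) set \<Rightarrow> (int \<Rightarrow> (nat \<Rightarrow> complex) set) \<Rightarrow> bool" where
  "is_mu_grading l \<theta> Y W \<longleftrightarrow>
     (let N = card Y in
      (\<forall>i. module.subspace cscale (W i) \<and> W i \<subseteq> Vsp N) \<and>
      (\<forall>v\<in>Vsp N. \<exists>!w. (\<forall>i. w i \<in> W i) \<and> finite {i. w i \<noteq> 0} \<and> v = (\<Sum>i\<in>{i. w i \<noteq> 0}. w i)) \<and>
      (\<forall>i. \<forall>w\<in>W i. mat_app N (Amat l \<theta> Y) w \<in> W (i - 1)) \<and>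
      (\<forall>i. \<forall>w\<in>W i. mat_app N (Lmat Y) w \<in> W (i + 1)) \<and>
      range (\<lambda>c. cscale c (Jvec l \<theta> Y)) \<subseteq> W 0 \<and>
      (row_app N (Ivec Y)) ` W 0 = UNIV)"

definition cdim :: "(nat \<Rightarrow> complex) set \<Rightarrow> nat" where
  "cdim S = vector_space.dim cscale S"

definition poincare :: "(int \<Rightarrow> (nat \<Rightarrow> complex) set) \<Rightarrow> int fls" where
  "poincare W = (\<Sum>i\<in>{i. W i \<noteq> {0}}. of_nat (cdim (W i)) * fls_X_intpow i)"

end

theory Submission
  imports Defs
begin


lemma downclosed_nat_initial:
  fixes S :: "nat set"
  assumes "finite S" "\<And>x y. x \<in> S \<Longrightarrow> y \<le> x \<Longrightarrow> y \<in> S"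
  shows "S = {..<card S}"
proof (cases "S = {}")
  case True then show ?thesis by simp
next
  case False
  define M where "M = Max S"
  have "M \<in> S" using False assms(1) M_def by simp
  have "S = {..M}"
  proof
    show "S \<subseteq> {..M}" using assms(1) M_def by auto
    show "{..M} \<subseteq> S" using assms(2) \<open>M \<in> S\<close> by auto
  qed
  then show ?thesis by (simp add: lessThan_Suc_atMost)
qed

locale yd =
  fixes Y :: "(nat \<times> nat) set"
  assumes young: "young Y"
begin

lemma fin: "finite Y" using young unfolding young_def by blast

lemma down: "(i, j) \<in> Y \<Longrightarrow> i' \<le> i \<Longrightarrow> j' \<le> j \<Longrightarrow> (i', j') \<in> Y"
  using young unfolding young_def by blast

definition rowl :: "nat \<Rightarrow> nat" where "rowl i = card {j. (i, j) \<in> Y}"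
definition coll :: "nat \<Rightarrow> nat" where "coll j = card {i. (i, j) \<in> Y}"

lemma row_fin: "finite {j. (i, j) \<in> Y}"
proof -
  have "{j. (i, j) \<in> Y} \<subseteq> snd ` Y" by force
  then show ?thesis using fin finite_subset by blast
qed

lemma col_fin: "finite {i. (i, j) \<in> Y}"
proof -
  have "{i. (i, j) \<in> Y} \<subseteq> fst ` Y" by force
  then show ?thesis using fin finite_subset by blast
qed

lemma row_eq: "{j. (i, j) \<in> Y} = {..<rowl i}"
  unfolding rowl_def by (rule downclosed_nat_initial[OF row_fin]) (auto intro: down)

lemma col_eq: "{i. (i, j) \<in> Y} = {..<coll j}"
  unfolding coll_def by (rule downclosed_nat_initial[OF col_fin]) (auto intro: down)

lemma mem_row: "(i, j) \<in> Y \<longleftrightarrow> j < rowl i"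
  using row_eq by blast

lemma mem_col: "(i, j) \<in> Y \<longleftrightarrow> i < coll j"
  using col_eq by blast

abbreviation "K \<equiv> frob_k Y"

lemma diag_eq: "{i. (i, i) \<in> Y} = {..<K}"
proof -
  have "finite {i. (i, i) \<in> Y}"
    using col_fin[of 0] by (rule finite_subset[rotated]) (auto intro: down)
  then show ?thesis unfolding frob_k_def
    by (rule downclosed_nat_initial) (auto intro: down)
qed

lemma mem_diag: "(b, b) \<in> Y \<longleftrightarrow> b < K"
  using diag_eq by blast

lemma rowl_gt: "b < K \<Longrightarrow> b < rowl b" using mem_diag mem_row by blast
lemma coll_gt: "b < K \<Longrightarrow> b < coll b" using mem_diag mem_col by blast

lemma rowl_mono: "b \<le> c \<Longrightarrow> rowl c \<le> rowl b"
  unfolding rowl_def by (rule card_mono[OF row_fin]) (auto intro: down)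
lemma coll_mono: "b \<le> c \<Longrightarrow> coll c \<le> coll b"
  unfolding coll_def by (rule card_mono[OF col_fin]) (auto intro: down)

abbreviation "r \<equiv> rr Y"
abbreviation "m \<equiv> mm Y"

lemma r_eq: "b < K \<Longrightarrow> r b = coll b - b"
  using coll_gt[of b] unfolding rr_def frob_b_def coll_def by simp
lemma m_eq: "b < K \<Longrightarrow> m b = rowl b + coll b - 2 * b - 1"
  using coll_gt[of b] rowl_gt[of b] unfolding mm_def frob_b_def frob_a_def coll_def rowl_def by simp
lemma a_eq: "b < K \<Longrightarrow> frob_a Y b = rowl b - b - 1"
  unfolding frob_a_def rowl_def by simp
lemma m_r: "b < K \<Longrightarrow> m b - r b = rowl b - b - 1"
  using coll_gt[of b] rowl_gt[of b] r_eq m_eq by simp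
lemma r_le_m: "r b \<le> m b" unfolding rr_def mm_def by simp
lemma r_pos: "1 \<le> r b" unfolding rr_def by simp
lemma m_pos: "1 \<le> m b" unfolding mm_def by simp

lemma r_strict: "b < c \<Longrightarrow> c < K \<Longrightarrow> r c < r b"
  using coll_mono[of b c] coll_gt[of c] r_eq[of b] r_eq[of c] by simp
lemma a_strict: "b < c \<Longrightarrow> c < K \<Longrightarrow> m c - r c < m b - r b"
  using rowl_mono[of b c] rowl_gt[of c] m_r[of b] m_r[of c] by simp

end

context yd begin

lemma offs_Suc: "offs Y (Suc b) = offs Y b + m b"
  unfolding offs_def by simp

lemma offs_lt: "b < c \<Longrightarrow> offs Y b + m b \<le> offs Y c"
proof (induction c)
  case 0 then show ?case by simp
next
  case (Suc c)
  then show ?case using offs_Suc[of c] by (cases "b = c") auto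
qed

lemma offs_mono: "b \<le> c \<Longrightarrow> offs Y b \<le> offs Y c"
  using offs_lt[of b c] by (cases "b = c") auto

lemma cover: "p < offs Y L \<Longrightarrow> \<exists>b<L. offs Y b \<le> p \<and> p < offs Y b + m b"
proof (induction L)
  case 0 then show ?case by (simp add: offs_def)
next
  case (Suc L)
  show ?case
  proof (cases "p < offs Y L")
    case True then show ?thesis using Suc.IH by (metis less_SucI)
  next
    case False then show ?thesis using Suc.prems offs_Suc[of L] by (intro exI[of _ L]) simp
  qed
qed

lemma blk_uniq: "offs Y b \<le> p \<Longrightarrow> p < offs Y b + m b \<Longrightarrow> offs Y c \<le> p \<Longrightarrow> p < offs Y c + m c \<Longrightarrow> b = c"
  using offs_lt[of b c] offs_lt[of c b] by (cases b c rule: linorder_cases) auto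

lemma blk_eq: "b < K \<Longrightarrow> offs Y b \<le> p \<Longrightarrow> p < offs Y b + m b \<Longrightarrow> blk Y p = b"
  unfolding blk_def by (rule the_equality) (auto dest: blk_uniq)

definition pos :: "nat \<Rightarrow> nat \<Rightarrow> nat" where "pos b u = offs Y b + u - 1"

definition Ix :: "(nat \<times> nat) set" where "Ix = {(b, u). b < K \<and> 1 \<le> u \<and> u \<le> m b}"

lemma blk_pos: "b < K \<Longrightarrow> 1 \<le> u \<Longrightarrow> u \<le> m b \<Longrightarrow> blk Y (pos b u) = b"
  unfolding pos_def by (rule blk_eq) auto

lemma loc_pos: "b < K \<Longrightarrow> 1 \<le> u \<Longrightarrow> u \<le> m b \<Longrightarrow> loc Y (pos b u) = u"
  unfolding loc_def using blk_pos[of b u] unfolding pos_def by simp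

lemma pos_lt: "b < K \<Longrightarrow> 1 \<le> u \<Longrightarrow> u \<le> m b \<Longrightarrow> pos b u < offs Y K"
  unfolding pos_def using offs_lt[of b K] by simp

lemma pos_inj: "(b, u) \<in> Ix \<Longrightarrow> (c, w) \<in> Ix \<Longrightarrow> pos b u = pos c w \<Longrightarrow> b = c \<and> u = w"
  unfolding Ix_def using blk_pos loc_pos by (metis (mono_tags, lifting) case_prod_conv mem_Collect_eq)

lemma pos_cases:
  assumes "p < offs Y K"
  obtains b u where "(b, u) \<in> Ix" "p = pos b u" "blk Y p = b" "loc Y p = u"
proof -
  obtain b where b: "b < K" "offs Y b \<le> p" "p < offs Y b + m b" using cover[OF assms] by blast
  define u where "u = p - offs Y b + 1"
  have "(b, u) \<in> Ix" using b unfolding Ix_def u_def by auto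
  moreover have "p = pos b u" using b unfolding pos_def u_def by simp
  moreover have "blk Y p = b" using blk_eq b by simp
  moreover have "loc Y p = u" using \<open>blk Y p = b\<close> unfolding loc_def u_def by simp
  ultimately show ?thesis using that by blast
qed

lemma bij_pos: "bij_betw (\<lambda>(b, u). pos b u) Ix {..<offs Y K}"
  unfolding bij_betw_def
proof
  show "inj_on (\<lambda>(b, u). pos b u) Ix" using pos_inj by (auto simp: inj_on_def)
  show "(\<lambda>(b, u). pos b u) ` Ix = {..<offs Y K}"
  proof
    show "(\<lambda>(b, u). pos b u) ` Ix \<subseteq> {..<offs Y K}" using pos_lt by (auto simp: Ix_def)
    show "{..<offs Y K} \<subseteq> (\<lambda>(b, u). pos b u) ` Ix"
    proof
      fix p assume "p \<in> {..<offs Y K}"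
      then obtain b u where "(b, u) \<in> Ix" "p = pos b u" using pos_cases by blast
      then show "p \<in> (\<lambda>(b, u). pos b u) ` Ix" by force
    qed
  qed
qed

definition cellmap :: "nat \<Rightarrow> nat \<Rightarrow> nat \<times> nat" where
  "cellmap b u = (if u \<le> r b then (b + r b - u, b) else (b, b + u - r b))"

lemma cellmap_in: "(b, u) \<in> Ix \<Longrightarrow> cellmap b u \<in> Y"
proof -
  assume "(b, u) \<in> Ix"
  then have b: "b < K" "1 \<le> u" "u \<le> m b" by (auto simp: Ix_def)
  show ?thesis
  proof (cases "u \<le> r b")
    case True
    have "b + r b - u < coll b" using r_eq[OF b(1)] coll_gt[OF b(1)] b(2) by linarith
    then have "(b + r b - u, b) \<in> Y" by (simp add: mem_col)
    then show ?thesis using True unfolding cellmap_def by simp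
  next
    case False
    have "b + u - r b < rowl b" using m_r[OF b(1)] rowl_gt[OF b(1)] b(3) False r_le_m[of b] by linarith
    then have "(b, b + u - r b) \<in> Y" by (simp add: mem_row)
    then show ?thesis using False unfolding cellmap_def by simp
  qed
qed

lemma cellmap_content: "content (cellmap b u) = int u - int (r b)"
  unfolding cellmap_def content_def by auto

lemma cellmap_min: "min (fst (cellmap b u)) (snd (cellmap b u)) = b"
  unfolding cellmap_def by auto

lemma cellmap_inj: "inj_on (\<lambda>(b, u). cellmap b u) Ix"
proof (rule inj_onI)
  fix x y assume "x \<in> Ix" "y \<in> Ix" and eq0: "(\<lambda>(b, u). cellmap b u) x = (\<lambda>(b, u). cellmap b u) y"
  obtain b u where x: "x = (b, u)" by force
  obtain c w where y: "y = (c, w)" by force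
  have eq: "cellmap b u = cellmap c w" using eq0 x y by simp
  have "b = c" using cellmap_min[of b u] cellmap_min[of c w] eq by simp
  moreover have "int u - int (r b) = int w - int (r c)" using cellmap_content[of b u] cellmap_content[of c w] eq by simp
  ultimately show "x = y" using x y by simp
qed

lemma cellmap_surj: "Y \<subseteq> (\<lambda>(b, u). cellmap b u) ` Ix"
proof
  fix x assume x: "x \<in> Y"
  obtain i j where ij: "x = (i, j)" by force
  show "x \<in> (\<lambda>(b, u). cellmap b u) ` Ix"
  proof (cases "j \<le> i")
    case True
    have "(j, j) \<in> Y" using down[of i j j j] x ij True by simp
    then have jK: "j < K" using mem_diag by blast
    have "i < coll j" using mem_col x ij by blast
    define u where "u = r j - (i - j)"
    have "(j, u) \<in> Ix" using jK r_eq[of j] True \<open>i < coll j\<close> r_le_m[of j] unfolding Ix_def u_def by auto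
    moreover have "cellmap j u = x" using True ij r_eq[of j] \<open>i < coll j\<close> jK unfolding cellmap_def u_def by auto
    ultimately show ?thesis by force
  next
    case False
    have "(i, i) \<in> Y" using down[of i j i i] x ij False by simp
    then have iK: "i < K" using mem_diag by blast
    have "j < rowl i" using mem_row x ij by blast
    define u where "u = r i + (j - i)"
    have "u \<le> m i" using m_r[OF iK] False \<open>j < rowl i\<close> r_le_m[of i] unfolding u_def by linarith
    then have "(i, u) \<in> Ix" using iK r_pos[of i] unfolding Ix_def u_def by simp
    moreover have "cellmap i u = x" using False ij unfolding cellmap_def u_def by auto
    ultimately show ?thesis by force
  qed
qed

lemma bij_cellmap: "bij_betw (\<lambda>(b, u). cellmap b u) Ix Y"
  unfolding bij_betw_def
proof
  show "inj_on (\<lambda>(b, u). cellmap b u) Ix" by (rule cellmap_inj)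
  show "(\<lambda>(b, u). cellmap b u) ` Ix = Y"
    using cellmap_surj cellmap_in by fastforce
qed

lemma N_eq: "card Y = offs Y K"
  using bij_betw_same_card[OF bij_cellmap] bij_betw_same_card[OF bij_pos] by simp

end


definition cnt :: "nat \<Rightarrow> (nat \<times> nat) set \<Rightarrow> nat \<Rightarrow> nat" where
  "cnt l Y k = card {c \<in> Y. (- content c) mod int l = int k}"

lemma young_down: "young Y \<Longrightarrow> (i, j) \<in> Y \<Longrightarrow> i' \<le> i \<Longrightarrow> j' \<le> j \<Longrightarrow> (i', j') \<in> Y"
  unfolding young_def by blast

lemma rim_inj:
  assumes R: "rim_hook_removal l Y Z"
  shows "inj_on content (Y - Z)"
proof (rule ccontr)
  assume "\<not> inj_on content (Y - Z)"
  then obtain c1 c2 where c: "c1 \<in> Y - Z" "c2 \<in> Y - Z" "c1 \<noteq> c2" "content c1 = content c2"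
    unfolding inj_on_def by blast
  have yY: "young Y" and yZ: "young Z" using R unfolding rim_hook_removal_def by auto
  have key: "\<exists>i1 j1 i2 j2. (i1, j1) \<in> Y - Z \<and> (i2, j2) \<in> Y - Z \<and> i1 < i2 \<and> j1 < j2"
  proof -
    obtain i1 j1 where 1: "c1 = (i1, j1)" by force
    obtain i2 j2 where 2: "c2 = (i2, j2)" by force
    have e: "int j1 - int i1 = int j2 - int i2" using c(4) 1 2 unfolding content_def by simp
    have "i1 \<noteq> i2" using e c(3) 1 2 by auto
    then show ?thesis
    proof (cases "i1 < i2")
      case True
      then have "j1 < j2" using e by linarith
      then show ?thesis using True c 1 2 by blast
    next
      case False
      then have "i2 < i1" using \<open>i1 \<noteq> i2\<close> by simp
      then have "j2 < j1" using e by linarith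
      then show ?thesis using \<open>i2 < i1\<close> c 1 2 by blast
    qed
  qed
  then obtain i1 j1 i2 j2 where k: "(i1, j1) \<in> Y - Z" "(i2, j2) \<in> Y - Z" "i1 < i2" "j1 < j2" by blast
  have sub: "(i', j') \<in> Y - Z" if "i1 \<le> i'" "i' \<le> i2" "j1 \<le> j'" "j' \<le> j2" for i' j'
  proof -
    have "(i', j') \<in> Y" using young_down[OF yY, of i2 j2 i' j'] k(2) that by simp
    moreover have "(i', j') \<notin> Z"
    proof
      assume "(i', j') \<in> Z"
      then have "(i1, j1) \<in> Z" using young_down[OF yZ, of i' j' i1 j1] that by simp
      then show False using k(1) by simp
    qed
    ultimately show ?thesis by simp
  qed
  have "{(i1, j1), (i1 + 1, j1), (i1, j1 + 1), (i1 + 1, j1 + 1)} \<subseteq> Y - Z"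
    using sub k(3,4) by auto
  then show False using R unfolding rim_hook_removal_def by blast
qed

lemma adj_content: "cell_adj a b \<Longrightarrow> content b = content a + 1 \<or> content b = content a - 1"
  unfolding cell_adj_def content_def by auto

lemma between_path:
  assumes "(a, b) \<in> {(x, y). x \<in> S \<and> y \<in> S \<and> cell_adj x y}\<^sup>*" "a \<in> S"
  shows "\<forall>z. min (content a) (content b) \<le> z \<and> z \<le> max (content a) (content b) \<longrightarrow> z \<in> content ` S"
  using assms(1)
proof (induction rule: rtrancl_induct)
  case base
  then show ?case using assms(2) by auto
next
  case (step y b)
  have "b \<in> S" and adj: "cell_adj y b" using step(2) by auto
  show ?case
  proof (intro allI impI)
    fix z assume z: "min (content a) (content b) \<le> z \<and> z \<le> max (content a) (content b)"
    show "z \<in> content ` S"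
    proof (cases "z = content b")
      case True then show ?thesis using \<open>b \<in> S\<close> by simp
    next
      case False
      then have "min (content a) (content y) \<le> z \<and> z \<le> max (content a) (content y)"
        using z adj_content[OF adj] by auto
      then show ?thesis using step(3) by blast
    qed
  qed
qed

lemma rim_interval:
  assumes R: "rim_hook_removal l Y Z" and l: "l > 0"
  shows "\<exists>x. content ` (Y - Z) = {x..<x + int l}"
proof -
  let ?S = "Y - Z"
  have fin: "finite ?S" using R unfolding rim_hook_removal_def young_def by auto
  have cS: "card ?S = l" using R unfolding rim_hook_removal_def by auto
  have cimg: "card (content ` ?S) = l" using card_image[OF rim_inj[OF R]] cS by simp
  have ne: "content ` ?S \<noteq> {}"
  proof
    assume "content ` ?S = {}"
    then have "card (content ` ?S) = 0" by (simp only: card.empty)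
    then show False using cimg l by simp
  qed
  have fimg: "finite (content ` ?S)" using fin by simp
  define lo where "lo = Min (content ` ?S)"
  define hi where "hi = Max (content ` ?S)"
  have conv: "\<forall>z. min (content a) (content b) \<le> z \<and> z \<le> max (content a) (content b) \<longrightarrow> z \<in> content ` ?S"
    if "a \<in> ?S" "b \<in> ?S" for a b
    using between_path[of a b ?S] R that unfolding rim_hook_removal_def cells_connected_def by blast
  have eq: "content ` ?S = {lo..hi}"
  proof
    show "content ` ?S \<subseteq> {lo..hi}" using fimg lo_def hi_def by auto
    show "{lo..hi} \<subseteq> content ` ?S"
    proof
      fix z assume z: "z \<in> {lo..hi}"
      have "lo \<in> content ` ?S" "hi \<in> content ` ?S" using fimg ne lo_def hi_def by auto
      then obtain a b where "a \<in> ?S" "b \<in> ?S" "content a = lo" "content b = hi" by blast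
      then show "z \<in> content ` ?S" using conv[of a b] z by auto
    qed
  qed
  have "card {lo..hi} = l" using eq cimg by simp
  then have "hi = lo + int l - 1" using ne eq by auto
  then have "{lo..hi} = {lo..<lo + int l}" by auto
  then show ?thesis using eq by blast
qed

lemma interval_residue:
  fixes x :: int and l k :: nat
  assumes "l > 0" "k < l"
  shows "card {y \<in> {x..<x + int l}. (- y) mod int l = int k} = 1"
proof -
  define y0 where "y0 = x + ((- x - int k) mod int l)"
  have "{y \<in> {x..<x + int l}. (- y) mod int l = int k} = {y0}"
  proof
    have y0in: "y0 \<in> {x..<x + int l}" using assms unfolding y0_def by simp
    have "(- y0) mod int l = int k"
    proof -
      have "(- y0) = int k + int l * ((- x - int k) div int l)"
        unfolding y0_def using div_mult_mod_eq[of "- x - int k" "int l"] by (simp add: algebra_simps)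
      then show ?thesis using assms by simp
    qed
    then show "{y0} \<subseteq> {y \<in> {x..<x + int l}. (- y) mod int l = int k}" using y0in by simp
    show "{y \<in> {x..<x + int l}. (- y) mod int l = int k} \<subseteq> {y0}"
    proof
      fix y assume y: "y \<in> {y \<in> {x..<x + int l}. (- y) mod int l = int k}"
      have "(- y) mod int l = (- y0) mod int l" using y \<open>(- y0) mod int l = int k\<close> by simp
      then have "int l dvd (- y) - (- y0)" by (simp only: mod_eq_dvd_iff)
      then obtain q where q: "(- y) - (- y0) = int l * q" by (elim dvdE)
      have qq: "int l * q = y0 - y" using q by simp
      have b1: "int l * q < int l" using qq y y0in by simp
      have b2: "- int l < int l * q" using qq y y0in by simp
      have "q < 1" using b1 assms(1) by (simp add: mult_less_cancel_left2)
      moreover have "q > -1" using b2 assms(1)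
        by (metis mult.right_neutral mult_minus_right mult_less_cancel_left_pos of_nat_0_less_iff)
      ultimately have "q = 0" by simp
      then have "y = y0" using q by simp
      then show "y \<in> {y0}" by simp
    qed
  qed
  then show ?thesis by simp
qed

lemma image_Collect_filter: "f ` {c \<in> A. P (f c)} = {y \<in> f ` A. P y}"
  by auto

lemma rim_cnt:
  assumes R: "rim_hook_removal l Y Z" and l: "l > 0" and k: "k < l"
  shows "card {c \<in> Y - Z. (- content c) mod int l = int k} = 1"
proof -
  obtain x where x: "content ` (Y - Z) = {x..<x + int l}" using rim_interval[OF R l] by blast
  let ?A = "{c \<in> Y - Z. (- content c) mod int l = int k}"
  have img: "content ` ?A = {y \<in> {x..<x + int l}. (- y) mod int l = int k}"
  proof -
    have "content ` ?A = {y \<in> content ` (Y - Z). (- y) mod int l = int k}" by (rule image_Collect_filter)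
    then show ?thesis using x by simp
  qed
  have inj: "inj_on content ?A"
    using rim_inj[OF R] by (rule inj_on_subset) (rule subsetI, simp)
  have "card ?A = card (content ` ?A)" using card_image[OF inj] by simp
  also have "\<dots> = 1" unfolding img by (rule interval_residue[OF l k])
  finally show ?thesis .
qed

lemma chain_cnt:
  assumes "(rim_hook_removal l)\<^sup>*\<^sup>* Y C" "l > 0"
  shows "\<exists>s. card Y = card C + s * l \<and> (\<forall>k<l. cnt l Y k = cnt l C k + s)"
  using assms(1)
proof (induction rule: rtranclp_induct)
  case base
  then show ?case by (intro exI[of _ 0]) simp
next
  case (step Z C')
  obtain s where s: "card Y = card Z + s * l" "\<forall>k<l. cnt l Y k = cnt l Z k + s" using step(3) by blast
  have R: "rim_hook_removal l Z C'" by fact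
  have sub: "C' \<subseteq> Z" and finZ: "finite Z" and cd: "card (Z - C') = l"
    using R unfolding rim_hook_removal_def young_def by auto
  have c1: "card Z = card C' + l"
    using cd card_Diff_subset[OF finite_subset[OF sub finZ] sub] card_mono[OF finZ sub] by simp
  have c2: "cnt l Z k = cnt l C' k + 1" if "k < l" for k
  proof -
    have "{c \<in> Z. (- content c) mod int l = int k} =
          {c \<in> C'. (- content c) mod int l = int k} \<union> {c \<in> Z - C'. (- content c) mod int l = int k}"
      using sub by blast
    moreover have "finite {c \<in> C'. (- content c) mod int l = int k}"
      using finite_subset[OF sub finZ] by simp
    moreover have "finite {c \<in> Z - C'. (- content c) mod int l = int k}" using finZ by simp
    ultimately have "card {c \<in> Z. (- content c) mod int l = int k} =
       card {c \<in> C'. (- content c) mod int l = int k} + card {c \<in> Z - C'. (- content c) mod int l = int k}"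
      by (simp add: card_Un_disjoint disjoint_iff)
    then show ?thesis unfolding cnt_def using rim_cnt[OF R assms(2) that] by simp
  qed
  show ?case
    by (rule exI[of _ "Suc s"]) (use s c1 c2 in auto)
qed



definition ISum :: "nat \<Rightarrow> (nat \<Rightarrow> rat) \<Rightarrow> int \<Rightarrow> nat \<Rightarrow> complex" where
  "ISum l \<theta> x L = (\<Sum>s<L. th l \<theta> (x + int s))"

lemma ISum_add: "ISum l \<theta> x (L1 + L2) = ISum l \<theta> x L1 + ISum l \<theta> (x + int L1) L2"
  unfolding ISum_def
proof (induction L2)
  case 0 then show ?case by simp
next
  case (Suc L2) then show ?case by (simp add: algebra_simps)
qed

lemma ISum_Suc_first: "ISum l \<theta> x (Suc L) = th l \<theta> x + ISum l \<theta> (x + 1) L"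
  using ISum_add[of l \<theta> x 1 L] by (simp add: ISum_def)

lemma refl_sum: "(\<Sum>x\<in>{1..t}. th l \<theta> (int r - int x)) = ISum l \<theta> (int r - int t) t"
proof (induction t)
  case 0 then show ?case by (simp add: ISum_def)
next
  case (Suc t)
  have "(\<Sum>x\<in>{1..Suc t}. th l \<theta> (int r - int x)) = (\<Sum>x\<in>{1..t}. th l \<theta> (int r - int x)) + th l \<theta> (int r - int (Suc t))"
    by simp
  also have "\<dots> = th l \<theta> (int r - int (Suc t)) + ISum l \<theta> (int r - int t) t" using Suc by simp
  also have "\<dots> = ISum l \<theta> (int r - int (Suc t)) (Suc t)" by (simp add: ISum_Suc_first)
  finally show ?case .
qed

lemma sum_by_residue:
  fixes g :: "nat \<Rightarrow> rat" and h :: "nat \<Rightarrow> nat"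
  assumes "\<And>s. h s < l"
  shows "(\<Sum>s<L. g (h s)) = (\<Sum>k<l. g k * of_nat (card {s. s < L \<and> h s = k}))"
proof -
  have "(\<Sum>k<l. g k * of_nat (card {s. s < L \<and> h s = k})) = (\<Sum>k<l. \<Sum>s<L. if h s = k then g k else 0)"
  proof (rule sum.cong[OF refl])
    fix k
    have "(\<Sum>s\<in>{s \<in> {..<L}. h s = k}. g k) = (\<Sum>s<L. if h s = k then g k else 0)"
      by (rule sum.inter_filter) simp
    moreover have "{s \<in> {..<L}. h s = k} = {s. s < L \<and> h s = k}" by auto
    ultimately show "g k * of_nat (card {s. s < L \<and> h s = k}) = (\<Sum>s<L. if h s = k then g k else 0)" by (simp add: mult.commute)
  qed
  also have "\<dots> = (\<Sum>s<L. \<Sum>k<l. if h s = k then g k else 0)" by (rule sum.swap)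
  also have "\<dots> = (\<Sum>s<L. g (h s))" using assms by (simp add: sum.delta')
  finally show ?thesis by simp
qed

context yd begin

lemma generic_interval:
  assumes l: "l > 0" and gen: "theta_generic l \<theta> v" and cntle: "\<forall>k<l. cnt l Y k \<le> v k"
    and b: "b < K" and L: "1 \<le> L" "L \<le> m b"
  shows "ISum l \<theta> (- int (m b - r b)) L \<noteq> 0"
proof -
  define x where "x = - int (m b - r b)"
  define i where "i = nat (x mod int l)"
  have il: "i < l" unfolding i_def using l by (simp add: nat_less_iff)
  have modeq: "nat ((x + int s) mod int l) = (i + s) mod l" for s
  proof -
    have "(x + int s) mod int l = (int i + int s) mod int l"
      unfolding i_def using l by (simp add: mod_add_left_eq)
    then show ?thesis by (simp add: zmod_int[symmetric] nat_int flip: of_nat_add)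
  qed
  have "ISum l \<theta> x L = of_rat (\<Sum>s<L. \<theta> ((i + s) mod l))"
    unfolding ISum_def th_def modeq by (simp add: of_rat_sum)
  also have "(\<Sum>s<L. \<theta> ((i + s) mod l)) = (\<Sum>k<l. \<theta> k * of_nat (cyc_root l i L k))"
    unfolding cyc_root_def by (rule sum_by_residue) (use l in simp)
  finally have eq: "ISum l \<theta> x L = of_rat (\<Sum>k<l. \<theta> k * of_nat (cyc_root l i L k))" .
  have bound: "cyc_root l i L k \<le> v k" if k: "k < l" for k
  proof -
    let ?S = "{s. s < L \<and> (i + s) mod l = k}"
    let ?f = "\<lambda>s. cellmap b (m b - s)"
    have inIx: "(b, m b - s) \<in> Ix" if "s < L" for s using that b L unfolding Ix_def by auto
    have "inj_on ?f ?S"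
    proof (rule inj_onI)
      fix s s' assume "s \<in> ?S" "s' \<in> ?S" "?f s = ?f s'"
      then have "(b, m b - s) = (b, m b - s')"
        using cellmap_inj inIx unfolding inj_on_def by (metis (no_types, lifting) case_prod_conv mem_Collect_eq)
      then show "s = s'" using \<open>s \<in> ?S\<close> \<open>s' \<in> ?S\<close> L by auto
    qed
    moreover have "?f ` ?S \<subseteq> {c \<in> Y. (- content c) mod int l = int k}"
    proof
      fix c assume "c \<in> ?f ` ?S"
      then obtain s where s: "s < L" "(i + s) mod l = k" "c = ?f s" by blast
      have "c \<in> Y" using cellmap_in[OF inIx[OF s(1)]] s(3) by simp
      moreover have "- content c = x + int s"
        using s L cellmap_content[of b "m b - s"] r_le_m[of b] unfolding x_def by simp
      moreover have "(x + int s) mod int l = int k"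
        using modeq[of s] s(2) l by (metis of_nat_0_less_iff pos_mod_sign int_nat_eq)
      ultimately show "c \<in> {c \<in> Y. (- content c) mod int l = int k}" by simp
    qed
    moreover have "finite {c \<in> Y. (- content c) mod int l = int k}" using fin by simp
    ultimately have "card ?S \<le> cnt l Y k" unfolding cnt_def using card_inj_on_le by blast
    then show ?thesis using cntle k unfolding cyc_root_def by force
  qed
  have "(\<Sum>k<l. \<theta> k * of_nat (cyc_root l i L k)) \<noteq> 0"
    using gen il L(1) bound unfolding theta_generic_def by blast
  then show ?thesis using eq unfolding x_def by simp
qed

end


lemma chain_zero:
  fixes \<Delta> :: "nat \<Rightarrow> nat \<Rightarrow> complex" and mb mc :: nat and D :: int
  assumes supp: "\<forall>s t. \<Delta> s t \<noteq> 0 \<longrightarrow> 1 \<le> s \<and> s \<le> mb \<and> 1 \<le> t \<and> t \<le> mc \<and> int t - int s = D"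
    and eq: "\<forall>s t. 1 \<le> s \<longrightarrow> s \<le> mb \<longrightarrow> 1 \<le> t \<longrightarrow> t \<le> mc \<longrightarrow>
               (if s < mb then \<Delta> (s + 1) t else 0) - (if 1 < t then \<Delta> s (t - 1) else 0) = 0"
    and cond: "D < 0 \<or> int mb + D < int mc"
  shows "\<Delta> s t = 0"
proof (cases "D < 0")
  case True
  have "\<forall>s. \<Delta> s t = 0"
  proof (induction t)
    case 0 then show ?case using supp by auto
  next
    case (Suc t)
    show ?case
    proof
      fix s
      show "\<Delta> s (Suc t) = 0"
      proof (rule ccontr)
        assume nz: "\<Delta> s (Suc t) \<noteq> 0"
        then have h: "1 \<le> s" "s \<le> mb" "Suc t \<le> mc" "int (Suc t) - int s = D" using supp by blast+
        then have s2: "2 \<le> s" using True by linarith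
        have e: "(if s - 1 < mb then \<Delta> (s - 1 + 1) (Suc t) else 0) - (if 1 < Suc t then \<Delta> (s - 1) (Suc t - 1) else 0) = 0"
          using eq[rule_format, of "s - 1" "Suc t"] h s2 by simp
        have "\<Delta> (s - 1 + 1) (Suc t) = (if 1 < Suc t then \<Delta> (s - 1) t else 0)"
          using e h s2 by (simp split: if_splits)
        also have "\<dots> = 0" using Suc.IH by simp
        finally show False using nz s2 by simp
      qed
    qed
  qed
  then show ?thesis by simp
next
  case False
  then have c: "int mb + D < int mc" using cond by simp
  show ?thesis
  proof (induction "mb - s" arbitrary: s t rule: less_induct)
    case less
    show ?case
    proof (rule ccontr)
      assume nz: "\<Delta> s t \<noteq> 0"
      then have h: "1 \<le> s" "s \<le> mb" "1 \<le> t" "t \<le> mc" "int t - int s = D" using supp by blast+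
      have t1: "t + 1 \<le> mc" using h c by linarith
      have e: "(if s < mb then \<Delta> (s + 1) (t + 1) else 0) - (if 1 < t + 1 then \<Delta> s (t + 1 - 1) else 0) = 0"
        using eq h t1 by simp
      show False
      proof (cases "s < mb")
        case True
        have "\<Delta> (s + 1) (t + 1) = 0" using less[of "s + 1"] True by simp
        then show False using e h nz True by simp
      next
        case False
        then show False using e h nz by simp
      qed
    qed
  qed
qed

lemma Mexp_lt_eqn:
  fixes rb rc mb mc :: nat and \<beta> :: complex
  assumes "1 \<le> rc" "rc < rb" "rb < mb" "int mc - int rc < int mb - int rb" "rc \<le> mc"
    and "1 \<le> s" "s \<le> mb" "1 \<le> t" "t \<le> mc"
  defines "M \<equiv> \<lambda>s t. (if int t - int s = int rc - int rb - 1 \<and> rb < s \<and> s \<le> mb \<and> 1 \<le> t \<and> t \<le> mc then - \<beta> else 0)"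
  shows "(if s < mb then M (s + 1) t else 0) - (if 1 < t then M s (t - 1) else 0) = (if s = rb \<and> t = rc then - \<beta> else 0)"
proof (cases "int t - int s = int rc - int rb")
  case False
  have "M (s + 1) t = 0" using False unfolding M_def by auto
  then have e1: "(if s < mb then M (s + 1) t else 0) = 0" by simp
  have "1 < t \<Longrightarrow> M s (t - 1) = 0" using False unfolding M_def by auto
  then have e2: "(if 1 < t then M s (t - 1) else 0) = 0" by simp
  have e3: "(if s = rb \<and> t = rc then - \<beta> else 0) = 0" using False by auto
  show ?thesis unfolding e1 e2 e3 by simp
next
  case True
  show ?thesis
  proof (cases s rb rule: linorder_cases)
    case less
    have "M (s + 1) t = 0" using less unfolding M_def by auto
    moreover have "M s (t - 1) = 0" using less unfolding M_def by auto
    ultimately show ?thesis using less by simp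
  next
    case equal
    have "t = rc" using True equal by simp
    have "M (s + 1) t = - \<beta>" using True equal assms(3,8,9) unfolding M_def by auto
    moreover have "M s (t - 1) = 0" using equal unfolding M_def by auto
    ultimately show ?thesis using equal \<open>t = rc\<close> assms(3) by simp
  next
    case greater
    have t2: "1 < t" using True greater assms(1) by linarith
    have ms: "M s (t - 1) = - \<beta>" using True greater assms(7,9) t2 unfolding M_def by auto
    have "s < mb" using True greater assms(4,9) by linarith
    moreover have "M (s + 1) t = - \<beta>" using True greater \<open>s < mb\<close> assms(8,9) unfolding M_def by auto
    ultimately show ?thesis using ms t2 greater by simp
  qed
qed

lemma Mexp_gt_eqn:
  fixes rb rc mb mc :: nat and \<beta> :: complex
  assumes "1 \<le> rb" "rb < rc" "rb \<le> mb" "int mb - int rb < int mc - int rc" "rc \<le> mc"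
    and "1 \<le> s" "s \<le> mb" "1 \<le> t" "t \<le> mc"
  defines "M \<equiv> \<lambda>s t. (if int t - int s = int rc - int rb - 1 \<and> 1 \<le> s \<and> s \<le> rb \<and> 1 \<le> t \<and> t \<le> mc then \<beta> else 0)"
  shows "(if s < mb then M (s + 1) t else 0) - (if 1 < t then M s (t - 1) else 0) = (if s = rb \<and> t = rc then - \<beta> else 0)"
proof (cases "int t - int s = int rc - int rb")
  case False
  have "M (s + 1) t = 0" using False unfolding M_def by auto
  then have e1: "(if s < mb then M (s + 1) t else 0) = 0" by simp
  have "1 < t \<Longrightarrow> M s (t - 1) = 0" using False unfolding M_def by auto
  then have e2: "(if 1 < t then M s (t - 1) else 0) = 0" by simp
  have e3: "(if s = rb \<and> t = rc then - \<beta> else 0) = 0" using False by auto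
  show ?thesis unfolding e1 e2 e3 by simp
next
  case True
  have t2: "1 < t" using True assms(2,6) by linarith
  have ms: "M s (t - 1) = (if s \<le> rb then \<beta> else 0)" using True t2 assms(6,9) unfolding M_def by auto
  show ?thesis
  proof (cases s rb rule: linorder_cases)
    case less
    have "s < mb" using less assms(3) by simp
    moreover have "M (s + 1) t = \<beta>" using True less assms(8,9) unfolding M_def by auto
    ultimately show ?thesis using less ms t2 by simp
  next
    case equal
    have "t = rc" using True equal by simp
    have "M (s + 1) t = 0" using equal unfolding M_def by auto
    then show ?thesis using equal \<open>t = rc\<close> ms t2 by simp
  next
    case greater
    have "M (s + 1) t = 0" using greater unfolding M_def by auto
    then show ?thesis using greater ms t2 by simp
  qed
qed



context yd begin

definition Mx :: "nat \<Rightarrow> (nat \<Rightarrow> rat) \<Rightarrow> nat \<Rightarrow> nat \<Rightarrow> nat \<Rightarrow> nat \<Rightarrow> complex" where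
  "Mx l \<theta> b c = (\<lambda>s t. if b < c then
      (if int t - int s = int (r c) - int (r b) - 1 \<and> r b < s \<and> s \<le> m b \<and> 1 \<le> t \<and> t \<le> m c then - beta l \<theta> Y b else 0)
    else (if int t - int s = int (r c) - int (r b) - 1 \<and> 1 \<le> s \<and> s \<le> r b \<and> 1 \<le> t \<and> t \<le> m c then beta l \<theta> Y b else 0))"

lemma offblk_eq:
  assumes b: "b < K" and c: "c < K" and bc: "b \<noteq> c"
  shows "offblk l \<theta> Y b c = Mx l \<theta> b c"
proof -
  define P where "P = (\<lambda>M :: nat \<Rightarrow> nat \<Rightarrow> complex.
     (\<forall>s t. M s t \<noteq> 0 \<longrightarrow> 1 \<le> s \<and> s \<le> mm Y b \<and> 1 \<le> t \<and> t \<le> mm Y c \<and>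
                           int t - int s = int (rr Y c) - int (rr Y b) - 1) \<and>
     (\<forall>s t. 1 \<le> s \<longrightarrow> s \<le> mm Y b \<longrightarrow> 1 \<le> t \<longrightarrow> t \<le> mm Y c \<longrightarrow>
        (if s < mm Y b then M (s + 1) t else 0) - (if 1 < t then M s (t - 1) else 0)
          = (if s = rr Y b \<and> t = rr Y c then - beta l \<theta> Y b else 0)))"
  have od: "offblk l \<theta> Y b c = (THE M. P M)" unfolding offblk_def P_def by simp
  have PMx1: "\<forall>s t. Mx l \<theta> b c s t \<noteq> 0 \<longrightarrow> 1 \<le> s \<and> s \<le> m b \<and> 1 \<le> t \<and> t \<le> m c \<and> int t - int s = int (r c) - int (r b) - 1"
  proof (intro allI impI)
    fix s t assume "Mx l \<theta> b c s t \<noteq> 0"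
    then show "1 \<le> s \<and> s \<le> m b \<and> 1 \<le> t \<and> t \<le> m c \<and> int t - int s = int (r c) - int (r b) - 1"
      unfolding Mx_def using r_pos[of b] r_le_m[of b] by (auto split: if_splits)
  qed
  have PMx2: "\<forall>s t. 1 \<le> s \<longrightarrow> s \<le> m b \<longrightarrow> 1 \<le> t \<longrightarrow> t \<le> m c \<longrightarrow>
     (if s < m b then Mx l \<theta> b c (s + 1) t else 0) - (if 1 < t then Mx l \<theta> b c s (t - 1) else 0)
          = (if s = r b \<and> t = r c then - beta l \<theta> Y b else 0)"
  proof (intro allI impI)
    fix s t assume st: "1 \<le> s" "s \<le> m b" "1 \<le> t" "t \<le> m c"
    show "(if s < m b then Mx l \<theta> b c (s + 1) t else 0) - (if 1 < t then Mx l \<theta> b c s (t - 1) else 0)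
          = (if s = r b \<and> t = r c then - beta l \<theta> Y b else 0)"
    proof (cases "b < c")
      case True
      have f: "1 \<le> r c" "r c < r b" "r b < m b" "int (m c) - int (r c) < int (m b) - int (r b)" "r c \<le> m c"
        using r_pos[of c] r_strict[OF True c] a_strict[OF True c] r_le_m[of b] r_le_m[of c] by auto
      have Mxeq: "Mx l \<theta> b c = (\<lambda>s t. if int t - int s = int (r c) - int (r b) - 1 \<and> r b < s \<and> s \<le> m b \<and> 1 \<le> t \<and> t \<le> m c then - beta l \<theta> Y b else 0)"
        using True unfolding Mx_def by simp
      show ?thesis unfolding Mxeq by (rule Mexp_lt_eqn[OF f st])
    next
      case False
      then have cb: "c < b" using bc by simp
      have f: "1 \<le> r b" "r b < r c" "r b \<le> m b" "int (m b) - int (r b) < int (m c) - int (r c)" "r c \<le> m c"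
        using r_pos[of b] r_strict[OF cb b] a_strict[OF cb b] r_le_m[of b] r_le_m[of c] by auto
      have Mxeq: "Mx l \<theta> b c = (\<lambda>s t. if int t - int s = int (r c) - int (r b) - 1 \<and> 1 \<le> s \<and> s \<le> r b \<and> 1 \<le> t \<and> t \<le> m c then beta l \<theta> Y b else 0)"
        using False unfolding Mx_def by simp
      show ?thesis unfolding Mxeq by (rule Mexp_gt_eqn[OF f st])
    qed
  qed
  have PMx: "P (Mx l \<theta> b c)" unfolding P_def using PMx1 PMx2 by blast
  have uniq: "M = Mx l \<theta> b c" if PM: "P M" for M
  proof -
    define \<Delta> where "\<Delta> = (\<lambda>s t. M s t - Mx l \<theta> b c s t)"
    have supp: "\<forall>s t. \<Delta> s t \<noteq> 0 \<longrightarrow> 1 \<le> s \<and> s \<le> m b \<and> 1 \<le> t \<and> t \<le> m c \<and> int t - int s = int (r c) - int (r b) - 1"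
    proof (intro allI impI)
      fix s t assume "\<Delta> s t \<noteq> 0"
      then have "M s t \<noteq> 0 \<or> Mx l \<theta> b c s t \<noteq> 0" unfolding \<Delta>_def by auto
      then show "1 \<le> s \<and> s \<le> m b \<and> 1 \<le> t \<and> t \<le> m c \<and> int t - int s = int (r c) - int (r b) - 1"
        using PM PMx unfolding P_def by blast
    qed
    have eq: "\<forall>s t. 1 \<le> s \<longrightarrow> s \<le> m b \<longrightarrow> 1 \<le> t \<longrightarrow> t \<le> m c \<longrightarrow>
               (if s < m b then \<Delta> (s + 1) t else 0) - (if 1 < t then \<Delta> s (t - 1) else 0) = 0"
    proof (intro allI impI)
      fix s t assume st: "1 \<le> s" "s \<le> m b" "1 \<le> t" "t \<le> m c"
      have e1: "(if s < m b then M (s + 1) t else 0) - (if 1 < t then M s (t - 1) else 0)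
          = (if s = r b \<and> t = r c then - beta l \<theta> Y b else 0)" using PM st unfolding P_def by blast
      have e2: "(if s < m b then Mx l \<theta> b c (s + 1) t else 0) - (if 1 < t then Mx l \<theta> b c s (t - 1) else 0)
          = (if s = r b \<and> t = r c then - beta l \<theta> Y b else 0)" using PMx st unfolding P_def by blast
      have "(if s < m b then \<Delta> (s + 1) t else 0) - (if 1 < t then \<Delta> s (t - 1) else 0) =
         ((if s < m b then M (s + 1) t else 0) - (if 1 < t then M s (t - 1) else 0)) -
         ((if s < m b then Mx l \<theta> b c (s + 1) t else 0) - (if 1 < t then Mx l \<theta> b c s (t - 1) else 0))"
        unfolding \<Delta>_def by simp
      then show "(if s < m b then \<Delta> (s + 1) t else 0) - (if 1 < t then \<Delta> s (t - 1) else 0) = 0"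
        using e1 e2 by simp
    qed
    have cond: "int (r c) - int (r b) - 1 < 0 \<or> int (m b) + (int (r c) - int (r b) - 1) < int (m c)"
    proof (cases "b < c")
      case True then show ?thesis using r_strict[OF True c] by simp
    next
      case False
      then have cb: "c < b" using bc by simp
      have "int (m b) - int (r b) < int (m c) - int (r c)" using a_strict[OF cb b] r_le_m[of b] r_le_m[of c] by linarith
      then show ?thesis by linarith
    qed
    have "\<Delta> s t = 0" for s t by (rule chain_zero[OF supp eq cond])
    then show ?thesis unfolding \<Delta>_def by (intro ext) simp
  qed
  show ?thesis unfolding od using PMx uniq by (rule the_equality)
qed

end


interpretation cs: vector_space cscale
  by unfold_locales (auto simp: cscale_def algebra_simps fun_eq_iff)

lemma sum_fun_apply: "(\<Sum>x\<in>S. f x) p = (\<Sum>x\<in>S. f x p)"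
  by (induction S rule: infinite_finite_induct) auto

definition ev :: "nat \<Rightarrow> nat \<Rightarrow> complex" where "ev p = (\<lambda>q. if q = p then 1 else 0)"

context yd begin

abbreviation "N \<equiv> card Y"

definition E :: "nat \<Rightarrow> nat \<Rightarrow> nat \<Rightarrow> complex" where "E b u = ev (pos b u)"

definition deg :: "nat \<Rightarrow> int" where "deg p = int (r (blk Y p)) - int (loc Y p)"

lemma Ix_D: "(b, s) \<in> Ix \<Longrightarrow> b < K \<and> 1 \<le> s \<and> s \<le> m b" unfolding Ix_def by simp
lemma Ix_I: "b < K \<Longrightarrow> 1 \<le> s \<Longrightarrow> s \<le> m b \<Longrightarrow> (b, s) \<in> Ix" unfolding Ix_def by simp

lemma pos_ltN: "(b, s) \<in> Ix \<Longrightarrow> pos b s < N"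
  using pos_lt N_eq Ix_D by simp

lemma E_eval: "(b, s) \<in> Ix \<Longrightarrow> (c, t) \<in> Ix \<Longrightarrow> E c t (pos b s) = (if b = c \<and> s = t then 1 else 0)"
  unfolding E_def ev_def using pos_inj by auto

lemma E_eval_out: "p \<ge> N \<Longrightarrow> (c, t) \<in> Ix \<Longrightarrow> E c t p = 0"
proof -
  assume "p \<ge> N" "(c, t) \<in> Ix"
  then have "pos c t \<noteq> p" using pos_ltN[of c t] by simp
  then show ?thesis unfolding E_def ev_def by simp
qed

lemma deg_pos: "(b, s) \<in> Ix \<Longrightarrow> deg (pos b s) = int (r b) - int s"
  unfolding deg_def using blk_pos loc_pos Ix_D by simp

lemma blk_pos': "(b, s) \<in> Ix \<Longrightarrow> blk Y (pos b s) = b" using blk_pos Ix_D by simp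
lemma loc_pos': "(b, s) \<in> Ix \<Longrightarrow> loc Y (pos b s) = s" using loc_pos Ix_D by simp

lemma ltN_cases:
  assumes "p < N"
  obtains b s where "(b, s) \<in> Ix" "p = pos b s"
  using pos_cases[of p] assms N_eq by metis

lemma vec_eqI:
  assumes "\<And>p. p \<ge> N \<Longrightarrow> f p = g p" and "\<And>b s. (b, s) \<in> Ix \<Longrightarrow> f (pos b s) = g (pos b s)"
  shows "f = g"
proof
  fix p show "f p = g p"
  proof (cases "p < N")
    case True then obtain b s where "(b, s) \<in> Ix" "p = pos b s" by (rule ltN_cases)
    then show ?thesis using assms(2) by simp
  next
    case False then show ?thesis using assms(1) by simp
  qed
qed

lemma mat_app_ev: "q < N \<Longrightarrow> mat_app N M (ev q) = (\<lambda>p. if p < N then M p q else 0)"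
  unfolding mat_app_def ev_def by (auto simp: if_distrib cong: if_cong)

lemma Amat_pos:
  assumes "(b, s) \<in> Ix" "(c, t) \<in> Ix"
  shows "Amat l \<theta> Y (pos b s) (pos c t) = (if b = c then Aloc l \<theta> (m b) (r b) s t else Mx l \<theta> b c s t)"
proof -
  have b1: "blk Y (pos b s) = b" "loc Y (pos b s) = s" using assms(1) blk_pos' loc_pos' by auto
  have c1: "blk Y (pos c t) = c" "loc Y (pos c t) = t" using assms(2) blk_pos' loc_pos' by auto
  show ?thesis
  proof (cases "b = c")
    case True then show ?thesis unfolding Amat_def b1 c1 by simp
  next
    case False then show ?thesis unfolding Amat_def b1 c1 using offblk_eq[of b c l \<theta>] assms Ix_D by simp
  qed
qed

lemma AE_eval:
  assumes "(b, s) \<in> Ix" "(c, t) \<in> Ix"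
  shows "mat_app N (Amat l \<theta> Y) (E c t) (pos b s) = (if b = c then Aloc l \<theta> (m b) (r b) s t else Mx l \<theta> b c s t)"
  unfolding E_def using mat_app_ev[OF pos_ltN[OF assms(2)]] pos_ltN[OF assms(1)] Amat_pos[OF assms] by simp

lemma AE_out: "p \<ge> N \<Longrightarrow> mat_app N M v p = 0"
  unfolding mat_app_def by simp

lemma L_eval:
  assumes bs: "(b, s) \<in> Ix"
  shows "mat_app N (Lmat Y) v (pos b s) = (if s < m b then v (pos b (s + 1)) else 0)"
proof -
  have trm: "Lmat Y (pos b s) q * v q = (if q = pos b (s + 1) then (if s < m b then v q else 0) else 0)"
    if q: "q < N" for q
  proof -
    obtain c w where cw: "(c, w) \<in> Ix" "q = pos c w" using ltN_cases[OF q] by blast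
    have L: "Lmat Y (pos b s) q = (if b = c \<and> w = s + 1 then 1 else 0)"
      unfolding Lmat_def using cw bs by (simp add: blk_pos' loc_pos')
    show ?thesis
    proof (cases "b = c \<and> w = s + 1")
      case True
      then have "s < m b" using Ix_D[OF cw(1)] by auto
      then show ?thesis using True L cw by simp
    next
      case False
      have "q \<noteq> pos b (s + 1) \<or> \<not> s < m b"
      proof (rule ccontr)
        assume "\<not> (q \<noteq> pos b (s + 1) \<or> \<not> s < m b)"
        then have "q = pos b (s + 1)" "s < m b" by auto
        then have "(b, s + 1) \<in> Ix" using bs Ix_D Ix_I by simp
        then show False using pos_inj[OF cw(1) \<open>(b, s + 1) \<in> Ix\<close>] cw(2) \<open>q = pos b (s + 1)\<close> False by auto
      qed
      then show ?thesis using L False by auto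
    qed
  qed
  have "mat_app N (Lmat Y) v (pos b s) = (\<Sum>q<N. Lmat Y (pos b s) q * v q)"
    unfolding mat_app_def using pos_ltN[OF bs] by simp
  also have "\<dots> = (\<Sum>q<N. if q = pos b (s + 1) then (if s < m b then v q else 0) else 0)"
    using trm by (intro sum.cong) auto
  also have "\<dots> = (if s < m b then v (pos b (s + 1)) else 0)"
  proof (cases "s < m b")
    case True
    then have "pos b (s + 1) < N" using pos_ltN Ix_I Ix_D bs by simp
    then show ?thesis using True by (simp add: sum.delta')
  next
    case False then show ?thesis by simp
  qed
  finally show ?thesis .
qed

end


lemma Aloc_pos: "1 \<le> t \<Longrightarrow> t < r \<Longrightarrow> r \<le> m \<Longrightarrow> Aloc l \<theta> m r (t + 1) t = ISum l \<theta> (int r - int t) t"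
  unfolding Aloc_def using refl_sum[of l \<theta> r t] by simp

lemma Aloc_neg: "1 \<le> t \<Longrightarrow> r \<le> t \<Longrightarrow> t < m \<Longrightarrow> Aloc l \<theta> m r (t + 1) t = - ISum l \<theta> (- int (m - r)) (m - t)"
  unfolding Aloc_def ISum_def by (simp add: atLeast0LessThan algebra_simps)

lemma Aloc_off: "s \<noteq> t + 1 \<Longrightarrow> Aloc l \<theta> m r s t = 0"
  unfolding Aloc_def by simp

lemma beta_ISum:
  assumes "1 \<le> rr Y b" "rr Y b \<le> mm Y b"
  shows "beta l \<theta> Y b = ISum l \<theta> (- int (mm Y b - rr Y b)) (mm Y b)"
proof -
  let ?r = "rr Y b" and ?m = "mm Y b"
  have s2: "(\<Sum>s\<in>{1..<?r}. th l \<theta> (int ?r - int s)) = ISum l \<theta> 1 (?r - 1)"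
  proof -
    have "{1..<?r} = {1..?r - 1}" using assms by auto
    then show ?thesis using refl_sum[of l \<theta> ?r "?r - 1"] assms by (simp add: of_nat_diff)
  qed
  have s3: "(\<Sum>s\<in>{0..<?m - ?r}. th l \<theta> (- int ?m + int ?r + int s)) = ISum l \<theta> (- int (?m - ?r)) (?m - ?r)"
    unfolding ISum_def using assms by (simp add: atLeast0LessThan of_nat_diff)
  have "ISum l \<theta> (- int (?m - ?r)) ((?m - ?r) + (1 + (?r - 1))) =
        ISum l \<theta> (- int (?m - ?r)) (?m - ?r) + (th l \<theta> 0 + ISum l \<theta> 1 (?r - 1))"
    unfolding ISum_add ISum_Suc_first[where L = "?r - 1", simplified] by (simp add: ISum_def)
  moreover have "(?m - ?r) + (1 + (?r - 1)) = ?m" using assms by simp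
  ultimately show ?thesis unfolding beta_def s2 s3 by (simp add: algebra_simps)
qed



locale gr = yd +
  fixes l :: nat and \<theta> :: "nat \<Rightarrow> rat" and W :: "int \<Rightarrow> (nat \<Rightarrow> complex) set"
  assumes grading: "is_mu_grading l \<theta> Y W"
    and nz: "\<And>b L. b < K \<Longrightarrow> 1 \<le> L \<Longrightarrow> L \<le> m b \<Longrightarrow> ISum l \<theta> (- int (m b - r b)) L \<noteq> 0"
begin

abbreviation "B \<equiv> beta l \<theta> Y"
abbreviation "AA \<equiv> mat_app N (Amat l \<theta> Y)"
abbreviation "LL \<equiv> mat_app N (Lmat Y)"

lemma gr_unf: "(\<forall>i. cs.subspace (W i) \<and> W i \<subseteq> Vsp N) \<and>
      (\<forall>v\<in>Vsp N. \<exists>!w. (\<forall>i. w i \<in> W i) \<and> finite {i. w i \<noteq> 0} \<and> v = (\<Sum>i\<in>{i. w i \<noteq> 0}. w i)) \<and>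
      (\<forall>i. \<forall>w\<in>W i. AA w \<in> W (i - 1)) \<and>
      (\<forall>i. \<forall>w\<in>W i. LL w \<in> W (i + 1)) \<and>
      range (\<lambda>c. cscale c (Jvec l \<theta> Y)) \<subseteq> W 0 \<and>
      (row_app N (Ivec Y)) ` W 0 = UNIV"
  using grading unfolding is_mu_grading_def Let_def .

lemma sub: "cs.subspace (W i)" using gr_unf by simp
lemma WsubV: "W i \<subseteq> Vsp N" using gr_unf by simp
lemma Wuniq: "\<forall>v\<in>Vsp N. \<exists>!w. (\<forall>i. w i \<in> W i) \<and> finite {i. w i \<noteq> 0} \<and> v = (\<Sum>i\<in>{i. w i \<noteq> 0}. w i)"
  using gr_unf by (rule conjunct1[OF conjunct2])
lemma WA: "w \<in> W i \<Longrightarrow> AA w \<in> W (i - 1)" using gr_unf by simp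
lemma WL: "w \<in> W i \<Longrightarrow> LL w \<in> W (i + 1)" using gr_unf by simp
lemma WJ: "Jvec l \<theta> Y \<in> W 0"
proof -
  have "range (\<lambda>c. cscale c (Jvec l \<theta> Y)) \<subseteq> W 0" using gr_unf by simp
  then have "cscale 1 (Jvec l \<theta> Y) \<in> W 0" by blast
  then show ?thesis by (simp add: cscale_def)
qed

lemma W0: "0 \<in> W i" by (rule cs.subspace_0[OF sub])
lemma Wadd: "x \<in> W i \<Longrightarrow> y \<in> W i \<Longrightarrow> x + y \<in> W i" by (rule cs.subspace_add[OF sub])
lemma Wscale: "x \<in> W i \<Longrightarrow> cscale c x \<in> W i" by (rule cs.subspace_scale[OF sub])
lemma Wdiff: "x \<in> W i \<Longrightarrow> y \<in> W i \<Longrightarrow> x - y \<in> W i" by (rule cs.subspace_diff[OF sub])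
lemma B_nz: "b < K \<Longrightarrow> B b \<noteq> 0"
  using beta_ISum[of Y b l \<theta>] r_pos r_le_m nz[of b "m b"] m_pos by simp

definition G :: "nat \<Rightarrow> int \<Rightarrow> nat \<Rightarrow> complex" where
  "G c d = (\<lambda>p. if p < N \<and> c \<le> blk Y p \<and> deg p = d then B (blk Y p) else 0)"

definition H :: "nat \<Rightarrow> nat \<Rightarrow> nat \<Rightarrow> complex" where
  "H c d = (\<lambda>p. if p < N \<and> blk Y p < c \<and> deg p = - int d then B (blk Y p) else 0)"

lemma G_eval: "(b, s) \<in> Ix \<Longrightarrow> G c d (pos b s) = (if c \<le> b \<and> int (r b) - int s = d then B b else 0)"
  unfolding G_def using pos_ltN deg_pos blk_pos' by simp

lemma H_eval: "(b, s) \<in> Ix \<Longrightarrow> H c d (pos b s) = (if b < c \<and> int (r b) - int s = - int d then B b else 0)"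
  unfolding H_def using pos_ltN deg_pos blk_pos' by simp

lemma J_G: "Jvec l \<theta> Y = G 0 0"
proof (rule vec_eqI)
  fix p assume p: "p \<ge> N"
  have "\<not> (\<exists>b<K. p = offs Y b + r b - 1)"
  proof
    assume "\<exists>b<K. p = offs Y b + r b - 1"
    then obtain b where b: "b < K" "p = pos b (r b)" unfolding pos_def by blast
    have "(b, r b) \<in> Ix" using Ix_I r_pos r_le_m b(1) by simp
    then have "pos b (r b) < N" by (rule pos_ltN)
    then show False using p b(2) by simp
  qed
  then have "Jvec l \<theta> Y p = 0" unfolding Jvec_def by (rule if_not_P)
  then show "Jvec l \<theta> Y p = G 0 0 p" unfolding G_def using p by simp
next
  fix b s assume bs: "(b, s) \<in> Ix"
  have uq: "b' = b \<and> s = r b'" if b': "b' < K" "pos b s = offs Y b' + r b' - 1" for b'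
  proof -
    have "(b', r b') \<in> Ix" using b' Ix_I r_pos r_le_m by simp
    moreover have "pos b s = pos b' (r b')" using b'(2) unfolding pos_def by simp
    ultimately show ?thesis using pos_inj[OF bs] by blast
  qed
  show "Jvec l \<theta> Y (pos b s) = G 0 0 (pos b s)"
  proof (cases "s = r b")
    case True
    have ex: "\<exists>b'<K. pos b s = offs Y b' + r b' - 1" using True Ix_D[OF bs] unfolding pos_def by blast
    have the: "(THE b'. b' < K \<and> pos b s = offs Y b' + r b' - 1) = b"
    proof (rule the_equality)
      show "b < K \<and> pos b s = offs Y b + r b - 1" using True Ix_D[OF bs] unfolding pos_def by simp
    next
      fix b' assume "b' < K \<and> pos b s = offs Y b' + r b' - 1"
      then show "b' = b" using uq by blast
    qed
    have "Jvec l \<theta> Y (pos b s) = B b" unfolding Jvec_def using ex the by simp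
    then show ?thesis unfolding G_eval[OF bs] using True by simp
  next
    case False
    have "\<not> (\<exists>b'<K. pos b s = offs Y b' + r b' - 1)" using uq False by blast
    then have "Jvec l \<theta> Y (pos b s) = 0" unfolding Jvec_def by (rule if_not_P)
    then show ?thesis unfolding G_eval[OF bs] using False by simp
  qed
qed

lemma L_G: "d \<ge> 0 \<Longrightarrow> LL (G 0 d) = G 0 (d + 1)"
proof (rule vec_eqI)
  fix p assume "p \<ge> N" then show "LL (G 0 d) p = G 0 (d + 1) p" unfolding mat_app_def G_def by simp
next
  fix b s assume bs: "(b, s) \<in> Ix" and d: "d \<ge> 0"
  show "LL (G 0 d) (pos b s) = G 0 (d + 1) (pos b s)"
  proof (cases "s < m b")
    case True
    then have bs1: "(b, s + 1) \<in> Ix" using bs Ix_D Ix_I by simp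
    show ?thesis unfolding L_eval[OF bs] G_eval[OF bs] G_eval[OF bs1] using True by auto
  next
    case False
    then have "s = m b" using Ix_D[OF bs] by simp
    then show ?thesis unfolding L_eval[OF bs] G_eval[OF bs] using r_le_m[of b] d by auto
  qed
qed

lemma G0_in: "G 0 (int d) \<in> W (int d)"
proof (induction d)
  case 0 then show ?case using WJ J_G by simp
next
  case (Suc d)
  then have "LL (G 0 (int d)) \<in> W (int d + 1)" by (rule WL)
  then show ?case using L_G[of "int d"] by (simp add: add.commute)
qed


lemma E_eval_cs: "(b, s) \<in> Ix \<Longrightarrow> (c, t) \<in> Ix \<Longrightarrow> cscale x (E c t) (pos b s) = (if b = c \<and> s = t then x else 0)"
  unfolding cscale_def using E_eval by simp

lemma G_out: "p \<ge> N \<Longrightarrow> G c d p = 0" unfolding G_def by simp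
lemma H_out: "p \<ge> N \<Longrightarrow> H c d p = 0" unfolding H_def by simp
lemma E_out_cs: "p \<ge> N \<Longrightarrow> (c, t) \<in> Ix \<Longrightarrow> cscale x (E c t) p = 0"
  unfolding cscale_def using E_eval_out by simp

lemma G_top:
  assumes c: "c < K"
  shows "G c (int (r c) - 1) = cscale (B c) (E c 1)"
proof (rule vec_eqI)
  have c1: "(c, 1) \<in> Ix" using c Ix_I m_pos by simp
  fix p assume "p \<ge> N" then show "G c (int (r c) - 1) p = cscale (B c) (E c 1) p"
    using G_out E_out_cs[OF _ c1] by simp
next
  have c1: "(c, 1) \<in> Ix" using c Ix_I m_pos by simp
  fix b s assume bs: "(b, s) \<in> Ix"
  have "(c \<le> b \<and> int (r b) - int s = int (r c) - 1) \<longleftrightarrow> (b = c \<and> s = 1)"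
  proof
    assume h: "c \<le> b \<and> int (r b) - int s = int (r c) - 1"
    show "b = c \<and> s = 1"
    proof (cases "b = c")
      case True then show ?thesis using h by simp
    next
      case False
      then have "r b < r c" using r_strict[of c b] h Ix_D[OF bs] by simp
      then show ?thesis using h Ix_D[OF bs] by simp
    qed
  qed simp
  then show "G c (int (r c) - 1) (pos b s) = cscale (B c) (E c 1) (pos b s)"
    unfolding G_eval[OF bs] E_eval_cs[OF bs c1] by auto
qed

lemma G_step:
  assumes c: "c < K"
  shows "G (Suc c) (int d) = G c (int d) - (if d < r c then cscale (B c) (E c (r c - d)) else 0)"
proof (rule vec_eqI)
  fix p assume "p \<ge> N" then show "G (Suc c) (int d) p = (G c (int d) - (if d < r c then cscale (B c) (E c (r c - d)) else 0)) p"
    using G_out E_out_cs[of p c "r c - d"] Ix_I[of c "r c - d"] c r_le_m[of c] by auto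
next
  fix b s assume bs: "(b, s) \<in> Ix"
  show "G (Suc c) (int d) (pos b s) = (G c (int d) - (if d < r c then cscale (B c) (E c (r c - d)) else 0)) (pos b s)"
  proof (cases "d < r c")
    case True
    have cI: "(c, r c - d) \<in> Ix" using Ix_I[of c "r c - d"] c r_le_m[of c] True by simp
    have ifeq: "(if d < r c then cscale (B c) (E c (r c - d)) else 0) = cscale (B c) (E c (r c - d))" using True by simp
    have "r b < r c" if "c < b" using r_strict[of c b] that Ix_D[OF bs] by simp
    moreover have "(c \<le> b \<and> \<not> Suc c \<le> b) = (b = c)" by auto
    ultimately show ?thesis using True Ix_D[OF bs] unfolding ifeq minus_apply G_eval[OF bs] E_eval_cs[OF bs cI] by auto
  next
    case False
    have ifeq: "(if d < r c then cscale (B c) (E c (r c - d)) else 0) = 0" using False by simp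
    have "(c \<le> b \<and> \<not> Suc c \<le> b) = (b = c)" by auto
    then show ?thesis using False Ix_D[OF bs] unfolding ifeq minus_apply G_eval[OF bs] by auto
  qed
qed

lemma A_pos:
  assumes c: "c < K" and u: "1 \<le> u" "u + 1 \<le> r c"
  shows "AA (E c u) = cscale (Aloc l \<theta> (m c) (r c) (u + 1) u) (E c (u + 1)) + G c (int (r c) - int u - 1) - cscale (B c) (E c (u + 1))"
proof -
  have cu: "(c, u) \<in> Ix" using c u r_le_m[of c] Ix_I by simp
  have cu1: "(c, u + 1) \<in> Ix" using c u r_le_m[of c] Ix_I by simp
  show ?thesis
  proof (rule vec_eqI)
    fix p assume p: "p \<ge> N"
    show "AA (E c u) p = (cscale (Aloc l \<theta> (m c) (r c) (u + 1) u) (E c (u + 1)) + G c (int (r c) - int u - 1) - cscale (B c) (E c (u + 1))) p"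
      unfolding minus_apply plus_fun_apply using AE_out[OF p] G_out[OF p] E_out_cs[OF p cu1] by simp
  next
    fix b s assume bs: "(b, s) \<in> Ix"
    show "AA (E c u) (pos b s) = (cscale (Aloc l \<theta> (m c) (r c) (u + 1) u) (E c (u + 1)) + G c (int (r c) - int u - 1) - cscale (B c) (E c (u + 1))) (pos b s)"
      unfolding minus_apply plus_fun_apply AE_eval[OF bs cu] G_eval[OF bs] E_eval_cs[OF bs cu1]
    proof (cases b c rule: linorder_cases)
      case equal
      show "(if b = c then Aloc l \<theta> (m b) (r b) s u else Mx l \<theta> b c s u) =
        (if b = c \<and> s = u + 1 then Aloc l \<theta> (m c) (r c) (u + 1) u else 0) +
        (if c \<le> b \<and> int (r b) - int s = int (r c) - int u - 1 then B b else 0) -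
        (if b = c \<and> s = u + 1 then B c else 0)"
        using equal Aloc_off[of s u l \<theta> "m c" "r c"] by auto
    next
      case less
      have "Mx l \<theta> b c s u = 0" using less u unfolding Mx_def by auto
      then show "(if b = c then Aloc l \<theta> (m b) (r b) s u else Mx l \<theta> b c s u) =
        (if b = c \<and> s = u + 1 then Aloc l \<theta> (m c) (r c) (u + 1) u else 0) +
        (if c \<le> b \<and> int (r b) - int s = int (r c) - int u - 1 then B b else 0) -
        (if b = c \<and> s = u + 1 then B c else 0)" using less by auto
    next
      case greater
      have "Mx l \<theta> b c s u = (if int (r b) - int s = int (r c) - int u - 1 then B b else 0)"
        using greater u Ix_D[OF bs] Ix_D[OF cu] unfolding Mx_def by auto
      then show "(if b = c then Aloc l \<theta> (m b) (r b) s u else Mx l \<theta> b c s u) =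
        (if b = c \<and> s = u + 1 then Aloc l \<theta> (m c) (r c) (u + 1) u else 0) +
        (if c \<le> b \<and> int (r b) - int s = int (r c) - int u - 1 then B b else 0) -
        (if b = c \<and> s = u + 1 then B c else 0)" using greater by auto
    qed
  qed
qed


lemma vec_cancel: "cscale x v + g - cscale y v - g = cscale (x - y) (v :: nat \<Rightarrow> complex)"
  unfolding cscale_def by (rule ext) (simp add: algebra_simps)

lemma vec_cancel2: "cscale x v - g + g = cscale x (v :: nat \<Rightarrow> complex)"
  by (rule ext) simp

lemma cscale_inv: "a \<noteq> 0 \<Longrightarrow> cscale (1 / a) (cscale a v) = v"
  unfolding cscale_def by (rule ext) simp

lemma B_split:
  assumes c: "c < K" and u: "u \<le> m c"
  shows "B c = ISum l \<theta> (- int (m c - r c)) (m c - u) + ISum l \<theta> (int (r c) - int u) u"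
proof -
  have "B c = ISum l \<theta> (- int (m c - r c)) ((m c - u) + u)"
    using beta_ISum[of Y c l \<theta>] r_pos r_le_m u by simp
  also have "\<dots> = ISum l \<theta> (- int (m c - r c)) (m c - u) + ISum l \<theta> (- int (m c - r c) + int (m c - u)) u"
    by (rule ISum_add)
  also have "- int (m c - r c) + int (m c - u) = int (r c) - int u" using u r_le_m[of c] by simp
  finally show ?thesis .
qed

lemma coef_pos_nz:
  assumes c: "c < K" and u: "1 \<le> u" "u < r c"
  shows "Aloc l \<theta> (m c) (r c) (u + 1) u - B c \<noteq> 0"
proof -
  have "Aloc l \<theta> (m c) (r c) (u + 1) u = ISum l \<theta> (int (r c) - int u) u"
    using Aloc_pos u r_le_m by simp
  moreover have "u \<le> m c" using u r_le_m[of c] by simp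
  then have "B c = ISum l \<theta> (- int (m c - r c)) (m c - u) + ISum l \<theta> (int (r c) - int u) u"
    by (rule B_split[OF c])
  moreover have "ISum l \<theta> (- int (m c - r c)) (m c - u) \<noteq> 0"
    using nz[OF c, of "m c - u"] u r_le_m[of c] by simp
  ultimately show ?thesis by simp
qed

lemma coef_neg_nz:
  assumes c: "c < K" and t: "1 \<le> t" "r c \<le> t" "t < m c"
  shows "Aloc l \<theta> (m c) (r c) (t + 1) t \<noteq> 0"
  using Aloc_neg[OF t, of l \<theta>] nz[OF c, of "m c - t"] t by simp

lemma E_pos_from_G:
  assumes c: "c < K" and GW: "\<And>d. G c (int d) \<in> W (int d)"
  shows "1 \<le> u \<Longrightarrow> u \<le> r c \<Longrightarrow> E c u \<in> W (int (r c) - int u)"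
proof (induction u)
  case 0 then show ?case by simp
next
  case (Suc u)
  show ?case
  proof (cases "u = 0")
    case True
    have "G c (int (r c - 1)) \<in> W (int (r c - 1))" by (rule GW)
    moreover have "int (r c - 1) = int (r c) - 1" using r_pos[of c] by simp
    ultimately have "cscale (B c) (E c 1) \<in> W (int (r c) - 1)" using G_top[OF c] by simp
    then have "cscale (1 / B c) (cscale (B c) (E c 1)) \<in> W (int (r c) - 1)" by (rule Wscale)
    then show ?thesis using cscale_inv[OF B_nz[OF c]] True by simp
  next
    case False
    then have u: "1 \<le> u" "u + 1 \<le> r c" using Suc.prems by auto
    have IH: "E c u \<in> W (int (r c) - int u)" using Suc.IH u by simp
    have AW: "AA (E c u) \<in> W (int (r c) - int u - 1)" using WA[OF IH] by simp
    have eq: "int (r c - u - 1) = int (r c) - int u - 1" using u by simp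
    have "G c (int (r c - u - 1)) \<in> W (int (r c - u - 1))" by (rule GW)
    then have GW': "G c (int (r c) - int u - 1) \<in> W (int (r c) - int u - 1)" unfolding eq .
    let ?a = "Aloc l \<theta> (m c) (r c) (u + 1) u"
    have "AA (E c u) - G c (int (r c) - int u - 1) = cscale (?a - B c) (E c (u + 1))"
      unfolding A_pos[OF c u] by (rule vec_cancel)
    moreover have "AA (E c u) - G c (int (r c) - int u - 1) \<in> W (int (r c) - int u - 1)"
      using AW GW' by (rule Wdiff)
    ultimately have "cscale (1 / (?a - B c)) (cscale (?a - B c) (E c (u + 1))) \<in> W (int (r c) - int u - 1)"
      using Wscale by metis
    then have "E c (u + 1) \<in> W (int (r c) - int u - 1)"
      using cscale_inv[OF coef_pos_nz[OF c u(1)]] u by simp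
    then show ?thesis by (simp add: algebra_simps)
  qed
qed

lemma pos_main: "c \<le> K \<Longrightarrow> G c (int d) \<in> W (int d)"
proof (induction c arbitrary: d)
  case 0 show ?case by (rule G0_in)
next
  case (Suc c)
  then have c: "c < K" by simp
  have GW: "\<And>d. G c (int d) \<in> W (int d)" using Suc by simp
  show ?case
  proof (cases "d < r c")
    case True
    have "E c (r c - d) \<in> W (int (r c) - int (r c - d))"
      using E_pos_from_G[OF c GW, of "r c - d"] True by simp
    then have "E c (r c - d) \<in> W (int d)" using True by simp
    then have mem: "G c (int d) - cscale (B c) (E c (r c - d)) \<in> W (int d)"
      using GW Wdiff Wscale by blast
    have eq: "G (Suc c) (int d) = G c (int d) - cscale (B c) (E c (r c - d))" using G_step[OF c, of d] True by simp
    show ?thesis unfolding eq by (rule mem)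
  next
    case False
    then show ?thesis using G_step[OF c, of d] GW by simp
  qed
qed

lemma E_pos: "c < K \<Longrightarrow> 1 \<le> u \<Longrightarrow> u \<le> r c \<Longrightarrow> E c u \<in> W (int (r c) - int u)"
  using E_pos_from_G[of c] pos_main[of c] by simp

end

context gr begin

lemma H_zero: "H 0 d = 0"
  unfolding H_def by (rule ext) simp

lemma H_step:
  assumes c: "c < K"
  shows "H (Suc c) d = H c d + (if r c + d \<le> m c then cscale (B c) (E c (r c + d)) else 0)"
proof (cases "r c + d \<le> m c")
  case True
  have cI: "(c, r c + d) \<in> Ix" using Ix_I[of c "r c + d"] c r_pos[of c] True by simp
  have ifeq: "(if r c + d \<le> m c then cscale (B c) (E c (r c + d)) else 0) = cscale (B c) (E c (r c + d))" using True by simp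
  show ?thesis unfolding ifeq
  proof (rule vec_eqI)
    fix p assume p: "p \<ge> N" then show "H (Suc c) d p = (H c d + cscale (B c) (E c (r c + d))) p"
      using H_out[OF p] E_out_cs[OF p cI] by simp
  next
    fix b s assume bs: "(b, s) \<in> Ix"
    have "(b < Suc c \<and> \<not> b < c) = (b = c)" by auto
    then show "H (Suc c) d (pos b s) = (H c d + cscale (B c) (E c (r c + d))) (pos b s)"
      unfolding plus_fun_apply H_eval[OF bs] E_eval_cs[OF bs cI] by auto
  qed
next
  case False
  have ifeq: "(if r c + d \<le> m c then cscale (B c) (E c (r c + d)) else 0) = 0" using False by simp
  show ?thesis unfolding ifeq
  proof (rule vec_eqI)
    fix p assume p: "p \<ge> N" then show "H (Suc c) d p = (H c d + 0) p"
      using H_out[OF p] by simp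
  next
    fix b s assume bs: "(b, s) \<in> Ix"
    have "(b < Suc c \<and> \<not> b < c) = (b = c)" by auto
    then show "H (Suc c) d (pos b s) = (H c d + 0) (pos b s)"
      unfolding plus_fun_apply H_eval[OF bs] using False Ix_D[OF bs] by auto
  qed
qed

lemma A_neg:
  assumes c: "c < K" and d: "1 \<le> d" "r c + d \<le> m c"
  shows "AA (E c (r c + d - 1)) = cscale (Aloc l \<theta> (m c) (r c) (r c + d) (r c + d - 1)) (E c (r c + d)) - H c d"
proof -
  let ?t = "r c + d - 1"
  have ct: "(c, ?t) \<in> Ix" using c d r_pos[of c] Ix_I by simp
  have ct1: "(c, r c + d) \<in> Ix" using c d r_pos[of c] Ix_I by simp
  show ?thesis
  proof (rule vec_eqI)
    fix p assume p: "p \<ge> N"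
    show "AA (E c ?t) p = (cscale (Aloc l \<theta> (m c) (r c) (r c + d) ?t) (E c (r c + d)) - H c d) p"
      unfolding minus_apply using AE_out[OF p] H_out[OF p] E_out_cs[OF p ct1] by simp
  next
    fix b s assume bs: "(b, s) \<in> Ix"
    show "AA (E c ?t) (pos b s) = (cscale (Aloc l \<theta> (m c) (r c) (r c + d) ?t) (E c (r c + d)) - H c d) (pos b s)"
      unfolding minus_apply AE_eval[OF bs ct] H_eval[OF bs] E_eval_cs[OF bs ct1]
    proof (cases b c rule: linorder_cases)
      case equal
      have "s \<noteq> r c + d \<Longrightarrow> Aloc l \<theta> (m c) (r c) s ?t = 0" using Aloc_off[of s ?t] d by simp
      moreover have "?t + 1 = r c + d" using d by simp
      ultimately show "(if b = c then Aloc l \<theta> (m b) (r b) s ?t else Mx l \<theta> b c s ?t) =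
         (if b = c \<and> s = r c + d then Aloc l \<theta> (m c) (r c) (r c + d) ?t else 0) -
         (if b < c \<and> int (r b) - int s = - int d then B b else 0)"
        using equal by auto
    next
      case less
      have "Mx l \<theta> b c s ?t = (if int (r b) - int s = - int d then - B b else 0)"
        using less d Ix_D[OF bs] r_pos[of c] unfolding Mx_def by auto
      then show "(if b = c then Aloc l \<theta> (m b) (r b) s ?t else Mx l \<theta> b c s ?t) =
         (if b = c \<and> s = r c + d then Aloc l \<theta> (m c) (r c) (r c + d) ?t else 0) -
         (if b < c \<and> int (r b) - int s = - int d then B b else 0)"
        using less by auto
    next
      case greater
      have "Mx l \<theta> b c s ?t = 0"
        using greater d unfolding Mx_def by auto
      then show "(if b = c then Aloc l \<theta> (m b) (r b) s ?t else Mx l \<theta> b c s ?t) =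
         (if b = c \<and> s = r c + d then Aloc l \<theta> (m c) (r c) (r c + d) ?t else 0) -
         (if b < c \<and> int (r b) - int s = - int d then B b else 0)"
        using greater by auto
    qed
  qed
qed

lemma neg_step:
  assumes d: "1 \<le> d"
    and src: "\<And>c. c < K \<Longrightarrow> r c + d \<le> m c \<Longrightarrow> E c (r c + d - 1) \<in> W (1 - int d)"
  shows "c \<le> K \<Longrightarrow> H c d \<in> W (- int d) \<and> (\<forall>c'<c. r c' + d \<le> m c' \<longrightarrow> E c' (r c' + d) \<in> W (- int d))"
proof (induction c)
  case 0
  have "H 0 d \<in> W (- int d)" unfolding H_zero by (rule W0)
  then show ?case by simp
next
  case (Suc c)
  then have c: "c < K" by simp
  have IH: "H c d \<in> W (- int d)" "\<forall>c'<c. r c' + d \<le> m c' \<longrightarrow> E c' (r c' + d) \<in> W (- int d)"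
    using Suc by auto
  show ?case
  proof (cases "r c + d \<le> m c")
    case True
    let ?a = "Aloc l \<theta> (m c) (r c) (r c + d) (r c + d - 1)"
    have a_nz: "?a \<noteq> 0" using coef_neg_nz[OF c, of "r c + d - 1"] d True r_pos[of c] by simp
    have "AA (E c (r c + d - 1)) \<in> W (1 - int d - 1)" using WA[OF src[OF c True]] .
    then have AW: "AA (E c (r c + d - 1)) \<in> W (- int d)" by simp
    have "AA (E c (r c + d - 1)) + H c d = cscale ?a (E c (r c + d))"
      unfolding A_neg[OF c d True] by (rule vec_cancel2)
    moreover have "AA (E c (r c + d - 1)) + H c d \<in> W (- int d)" using AW IH(1) by (rule Wadd)
    ultimately have "cscale (1 / ?a) (cscale ?a (E c (r c + d))) \<in> W (- int d)" using Wscale by metis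
    then have Ec: "E c (r c + d) \<in> W (- int d)" using cscale_inv[OF a_nz] by simp
    have eq: "H (Suc c) d = H c d + cscale (B c) (E c (r c + d))" using H_step[OF c, of d] True by simp
    have "H (Suc c) d \<in> W (- int d)" unfolding eq using IH(1) Wscale[OF Ec] by (rule Wadd)
    moreover have "\<forall>c'<Suc c. r c' + d \<le> m c' \<longrightarrow> E c' (r c' + d) \<in> W (- int d)"
      using IH(2) Ec less_Suc_eq by auto
    ultimately show ?thesis by simp
  next
    case False
    have eq: "H (Suc c) d = H c d" using H_step[OF c, of d] False by simp
    have "\<forall>c'<Suc c. r c' + d \<le> m c' \<longrightarrow> E c' (r c' + d) \<in> W (- int d)"
      using IH(2) False less_Suc_eq by auto
    then show ?thesis unfolding eq using IH(1) by simp
  qed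
qed

lemma E_neg: "1 \<le> d \<Longrightarrow> c < K \<Longrightarrow> r c + d \<le> m c \<Longrightarrow> E c (r c + d) \<in> W (- int d)"
proof (induction d arbitrary: c)
  case 0 then show ?case by simp
next
  case (Suc d)
  have src: "E c' (r c' + Suc d - 1) \<in> W (1 - int (Suc d))" if "c' < K" "r c' + Suc d \<le> m c'" for c'
  proof (cases "d = 0")
    case True
    then show ?thesis using E_pos[of c' "r c'"] that r_pos[of c'] by simp
  next
    case False
    then show ?thesis using Suc.IH[of c'] that by simp
  qed
  have "H K (Suc d) \<in> W (- int (Suc d)) \<and> (\<forall>c'<K. r c' + Suc d \<le> m c' \<longrightarrow> E c' (r c' + Suc d) \<in> W (- int (Suc d)))"
    by (rule neg_step[of "Suc d" K]) (use src in auto)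
  then show ?case using Suc.prems by blast
qed

lemma E_all: "(b, u) \<in> Ix \<Longrightarrow> E b u \<in> W (int (r b) - int u)"
proof -
  assume bu: "(b, u) \<in> Ix"
  show ?thesis
  proof (cases "u \<le> r b")
    case True then show ?thesis using E_pos Ix_D[OF bu] by simp
  next
    case False
    then have "E b (r b + (u - r b)) \<in> W (- int (u - r b))" using E_neg[of "u - r b" b] Ix_D[OF bu] by simp
    then show ?thesis using False by (simp add: of_nat_diff)
  qed
qed

end


lemma ev_inj: "ev p = ev q \<longleftrightarrow> p = q"
proof
  assume "ev p = ev q"
  then have "ev p p = ev q p" by simp
  then show "p = q" unfolding ev_def by (cases "p = q") auto
qed simp

lemma ev_nz: "ev p \<noteq> 0"
proof
  assume "ev p = 0"
  then have "ev p p = 0" by simp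
  then show False unfolding ev_def by simp
qed

lemma ev_indep: "\<not> cs.dependent (ev ` S)"
proof
  assume "cs.dependent (ev ` S)"
  then obtain t u where tu: "finite t" "t \<subseteq> ev ` S" "(\<Sum>v\<in>t. cscale (u v) v) = 0" "\<exists>v\<in>t. u v \<noteq> 0"
    unfolding cs.dependent_explicit by blast
  then obtain v0 where v0: "v0 \<in> t" "u v0 \<noteq> 0" by blast
  then obtain p0 where p0: "v0 = ev p0" using tu(2) by blast
  have "(\<Sum>v\<in>t. cscale (u v) v) p0 = (\<Sum>v\<in>t. u v * v p0)" by (simp add: sum_fun_apply cscale_def)
  also have "\<dots> = (\<Sum>v\<in>t. if v = v0 then u v else 0)"
  proof (rule sum.cong[OF refl])
    fix v assume "v \<in> t"
    then obtain p where "v = ev p" using tu(2) by blast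
    then show "u v * v p0 = (if v = v0 then u v else 0)" using p0 ev_inj[of p p0] by (auto simp: ev_def)
  qed
  also have "\<dots> = u v0" using v0 tu(1) by (simp add: sum.delta')
  finally show False using tu(3) v0 by simp
qed

context gr begin

definition Pd :: "int \<Rightarrow> nat set" where "Pd i = {p. p < N \<and> deg p = i}"

lemma ev_in_W: "p < N \<Longrightarrow> ev p \<in> W (deg p)"
proof -
  assume "p < N"
  then obtain b s where bs: "(b, s) \<in> Ix" "p = pos b s" by (rule ltN_cases)
  then show ?thesis using E_all[OF bs(1)] deg_pos[OF bs(1)] unfolding E_def by simp
qed

lemma comp_in: "(\<lambda>p. if p < N \<and> deg p = j then w p else 0) = (\<Sum>p\<in>Pd j. cscale (w p) (ev p))"
proof (rule ext)
  fix q
  have fin: "finite (Pd j)" unfolding Pd_def by simp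
  have "(\<Sum>p\<in>Pd j. cscale (w p) (ev p)) q = (\<Sum>p\<in>Pd j. if p = q then w p else 0)"
    unfolding sum_fun_apply cscale_def ev_def by (rule sum.cong) auto
  also have "\<dots> = (if q \<in> Pd j then w q else 0)" using fin by (simp add: sum.delta)
  finally show "(if q < N \<and> deg q = j then w q else 0) = (\<Sum>p\<in>Pd j. cscale (w p) (ev p)) q"
    unfolding Pd_def by simp
qed

lemma comp_W: "(\<lambda>p. if p < N \<and> deg p = j then w p else 0) \<in> W j"
  unfolding comp_in by (rule cs.subspace_sum[OF sub]) (use ev_in_W Wscale in \<open>auto simp: Pd_def\<close>)

lemma comp_span: "(\<lambda>p. if p < N \<and> deg p = j then w p else 0) \<in> cs.span (ev ` Pd j)"
  unfolding comp_in by (rule cs.span_sum) (auto intro: cs.span_scale cs.span_base)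

lemma W_span: "W i \<subseteq> cs.span (ev ` Pd i)"
proof
  fix w assume wW: "w \<in> W i"
  then have wV: "w \<in> Vsp N" using WsubV by blast
  define f where "f = (\<lambda>j p. if p < N \<and> deg p = j then w p else 0)"
  define g where "g = (\<lambda>j. if j = i then w else 0)"
  have fW: "\<forall>j. f j \<in> W j" unfolding f_def using comp_W by simp
  have ffin: "finite {j. f j \<noteq> 0}"
  proof (rule finite_subset[of _ "deg ` {..<N}"])
    show "{j. f j \<noteq> 0} \<subseteq> deg ` {..<N}"
    proof
      fix j assume "j \<in> {j. f j \<noteq> 0}"
      then obtain p where "f j p \<noteq> 0" by (auto simp: fun_eq_iff)
      then show "j \<in> deg ` {..<N}" unfolding f_def by (auto split: if_splits)
    qed
  qed simp
  have fsum: "w = (\<Sum>j\<in>{j. f j \<noteq> 0}. f j)"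
  proof (rule ext)
    fix p
    have "(\<Sum>j\<in>{j. f j \<noteq> 0}. f j) p = (\<Sum>j\<in>{j. f j \<noteq> 0}. if deg p = j then (if p < N then w p else 0) else 0)"
      unfolding sum_fun_apply f_def by (rule sum.cong) auto
    also have "\<dots> = (if deg p \<in> {j. f j \<noteq> 0} then (if p < N then w p else 0) else 0)"
      using ffin by (simp add: sum.delta)
    also have "\<dots> = w p"
    proof (cases "p < N \<and> w p \<noteq> 0")
      case True
      then have "f (deg p) p \<noteq> 0" unfolding f_def by simp
      then have "f (deg p) \<noteq> 0" by auto
      then show ?thesis using True by simp
    next
      case False
      then show ?thesis using wV unfolding Vsp_def by auto
    qed
    finally show "w p = (\<Sum>j\<in>{j. f j \<noteq> 0}. f j) p" by simp
  qed
  have gW: "\<forall>j. g j \<in> W j" unfolding g_def using wW W0 by simp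
  have gfin: "finite {j. g j \<noteq> 0}"
    by (rule finite_subset[of _ "{i}"]) (auto simp: g_def)
  have gsum: "w = (\<Sum>j\<in>{j. g j \<noteq> 0}. g j)"
  proof (cases "w = 0")
    case True
    then have "{j. g j \<noteq> 0} = {}" unfolding g_def by auto
    then show ?thesis using True by simp
  next
    case False
    then have "{j. g j \<noteq> 0} = {i}" unfolding g_def by auto
    then show ?thesis by (simp add: g_def)
  qed
  have ex1: "\<exists>!w'. (\<forall>i. w' i \<in> W i) \<and> finite {i. w' i \<noteq> 0} \<and> w = (\<Sum>i\<in>{i. w' i \<noteq> 0}. w' i)"
    using Wuniq wV by (rule bspec)
  have Pf: "(\<forall>i. f i \<in> W i) \<and> finite {i. f i \<noteq> 0} \<and> w = (\<Sum>i\<in>{i. f i \<noteq> 0}. f i)"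
    using fW ffin fsum by blast
  have Pg: "(\<forall>i. g i \<in> W i) \<and> finite {i. g i \<noteq> 0} \<and> w = (\<Sum>i\<in>{i. g i \<noteq> 0}. g i)"
    using gW gfin gsum by blast
  obtain x where hx: "\<And>y. (\<forall>i. y i \<in> W i) \<and> finite {i. y i \<noteq> 0} \<and> w = (\<Sum>i\<in>{i. y i \<noteq> 0}. y i) \<Longrightarrow> y = x"
    using ex1 by (elim ex1E) blast
  have "f = x" by (rule hx[OF Pf])
  moreover have "g = x" by (rule hx[OF Pg])
  ultimately have "f = g" by simp
  then have "f i = w" unfolding g_def by simp
  then show "w \<in> cs.span (ev ` Pd i)" using comp_span[of i w] unfolding f_def by simp
qed

lemma ev_Pd_W: "ev ` Pd i \<subseteq> W i"
  using ev_in_W unfolding Pd_def by auto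

lemma cdim_W: "cdim (W i) = card (Pd i)"
proof -
  have "card (ev ` Pd i) = cs.dim (W i)"
    by (rule cs.basis_card_eq_dim[OF ev_Pd_W W_span ev_indep])
  moreover have "card (ev ` Pd i) = card (Pd i)"
    by (rule card_image) (auto simp: inj_on_def ev_inj)
  ultimately show ?thesis unfolding cdim_def by simp
qed

lemma nonzero_set: "{i. W i \<noteq> {0}} = deg ` {..<N}"
proof
  show "{i. W i \<noteq> {0}} \<subseteq> deg ` {..<N}"
  proof
    fix i assume "i \<in> {i. W i \<noteq> {0}}"
    then obtain w where w: "w \<in> W i" "w \<noteq> 0" using W0 by blast
    have "Pd i \<noteq> {}"
    proof
      assume "Pd i = {}"
      then have "W i \<subseteq> {0}" using W_span[of i] by simp
      then show False using w by blast
    qed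
    then show "i \<in> deg ` {..<N}" unfolding Pd_def by auto
  qed
  show "deg ` {..<N} \<subseteq> {i. W i \<noteq> {0}}"
  proof
    fix i assume "i \<in> deg ` {..<N}"
    then obtain p where p: "p < N" "i = deg p" by blast
    have "ev p \<in> W i" using ev_in_W p by simp
    moreover have "ev p \<noteq> 0" by (rule ev_nz)
    ultimately show "i \<in> {i. W i \<noteq> {0}}" by auto
  qed
qed

lemma poincare_sum: "poincare W = (\<Sum>p<N. fls_X_intpow (deg p))"
proof -
  have "(\<Sum>p<N. (fls_X_intpow (deg p) :: int fls)) =
        (\<Sum>i\<in>deg ` {..<N}. \<Sum>p\<in>{p \<in> {..<N}. deg p = i}. fls_X_intpow (deg p))"
    by (rule sum.image_gen) simp
  also have "\<dots> = (\<Sum>i\<in>deg ` {..<N}. of_nat (card (Pd i)) * fls_X_intpow i)"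
  proof (rule sum.cong[OF refl])
    fix i
    have "(\<Sum>p\<in>{p \<in> {..<N}. deg p = i}. (fls_X_intpow (deg p) :: int fls)) = (\<Sum>p\<in>Pd i. fls_X_intpow i)"
      unfolding Pd_def by (rule sum.cong) auto
    then show "(\<Sum>p\<in>{p \<in> {..<N}. deg p = i}. (fls_X_intpow (deg p) :: int fls)) = of_nat (card (Pd i)) * fls_X_intpow i"
      by simp
  qed
  finally show ?thesis unfolding poincare_def nonzero_set cdim_W by simp
qed

end


lemma swap_inj: "inj_on (\<lambda>(i, j). (j, i)) (A :: (nat \<times> nat) set)"
  by (auto simp: inj_on_def)

lemma content_swap: "content ((\<lambda>(i, j). (j, i)) c) = - content c"
  unfolding content_def by (cases c) auto

lemma transp_transp: "transp_diag (transp_diag Y) = Y"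
  unfolding transp_diag_def by (force simp: image_image)

lemma mem_transp: "(i, j) \<in> transp_diag Y \<longleftrightarrow> (j, i) \<in> Y"
  unfolding transp_diag_def by force

lemma young_transp: "young Y \<Longrightarrow> young (transp_diag Y)"
proof -
  assume y: "young Y"
  have "finite (transp_diag Y)" using y unfolding young_def transp_diag_def by simp
  moreover have "(i', j') \<in> transp_diag Y" if "(i, j) \<in> transp_diag Y" "i' \<le> i" "j' \<le> j" for i j i' j'
    using young_down[OF y, of j i j' i'] that unfolding mem_transp by simp
  ultimately show ?thesis unfolding young_def by blast
qed

lemma card_transp: "card (transp_diag Y) = card Y"
  unfolding transp_diag_def by (rule card_image[OF swap_inj])

lemma sum_transp: "(\<Sum>c\<in>transp_diag Y. f c) = (\<Sum>c\<in>Y. f ((\<lambda>(i, j). (j, i)) c))"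
  unfolding transp_diag_def by (simp add: sum.reindex[OF swap_inj] comp_def)

context yd begin

lemma sum_deg_Res: "(\<Sum>p<N. (fls_X_intpow (deg p) :: int fls)) = Res (transp_diag Y)"
proof -
  let ?F = "\<lambda>i. (fls_X_intpow i :: int fls)"
  have "(\<Sum>p<N. ?F (deg p)) = (\<Sum>x\<in>Ix. ?F (deg ((\<lambda>(b, u). pos b u) x)))"
    using sum.reindex_bij_betw[OF bij_pos, of "\<lambda>p. ?F (deg p)"] N_eq by simp
  also have "\<dots> = (\<Sum>x\<in>Ix. ?F (- content ((\<lambda>(b, u). cellmap b u) x)))"
    by (rule sum.cong[OF refl]) (auto simp: deg_pos cellmap_content)
  also have "\<dots> = (\<Sum>c\<in>Y. ?F (- content c))"
    by (rule sum.reindex_bij_betw[OF bij_cellmap])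
  also have "\<dots> = Res (transp_diag Y)"
    unfolding Res_def sum_transp content_swap by simp
  finally show ?thesis .
qed

end

lemma Res_nth: "finite A \<Longrightarrow> fls_nth (Res A) d = int (card {c \<in> A. content c = d})"
proof -
  assume fin: "finite A"
  have "fls_nth (Res A) d = (\<Sum>c\<in>A. if content c = d then 1 else 0)"
    unfolding Res_def fls_nth_sum by (rule sum.cong) auto
  also have "\<dots> = int (card {c \<in> A. content c = d})"
    using fin by (simp add: sum.If_cases Int_def conj_commute eq_commute)
  finally show ?thesis .
qed

lemma young_mem_iff:
  assumes y: "young A"
  shows "(i, j) \<in> A \<longleftrightarrow> min i j < card {c \<in> A. content c = int j - int i}"
proof -
  have fin: "finite A" using y unfolding young_def by blast
  let ?S = "{c \<in> A. content c = int j - int i}"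
  let ?g = "\<lambda>t. (i - t, j - t)"
  have ginj: "inj_on ?g {..min i j}" by (auto simp: inj_on_def)
  show ?thesis
  proof
    assume ij: "(i, j) \<in> A"
    have "?g ` {..min i j} \<subseteq> ?S"
    proof
      fix c assume "c \<in> ?g ` {..min i j}"
      then obtain t where t: "t \<le> min i j" "c = ?g t" by blast
      then have "c \<in> A" using young_down[OF y ij, of "i - t" "j - t"] by simp
      moreover have "content c = int j - int i" using t unfolding content_def by auto
      ultimately show "c \<in> ?S" by simp
    qed
    then have "card (?g ` {..min i j}) \<le> card ?S" using fin by (intro card_mono) auto
    then show "min i j < card ?S" using card_image[OF ginj] by simp
  next
    assume lt: "min i j < card ?S"
    show "(i, j) \<in> A"
    proof (rule ccontr)
      assume nij: "(i, j) \<notin> A"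
      have "?S \<subseteq> ?g ` {1..min i j}"
      proof
        fix c assume c: "c \<in> ?S"
        obtain i' j' where c': "c = (i', j')" by force
        have e: "int j' - int i' = int j - int i" using c c' unfolding content_def by simp
        have "i' < i"
        proof (rule ccontr)
          assume "\<not> i' < i"
          then have "i \<le> i'" "j \<le> j'" using e by auto
          then have "(i, j) \<in> A" using young_down[OF y, of i' j' i j] c c' by simp
          then show False using nij by simp
        qed
        then have "i - i' \<le> j" using e by linarith
        then have "c = ?g (i - i')" "i - i' \<in> {1..min i j}" using c' e \<open>i' < i\<close> by auto
        then show "c \<in> ?g ` {1..min i j}" by blast
      qed
      then have "card ?S \<le> card (?g ` {1..min i j})" by (intro card_mono) auto
      also have "\<dots> \<le> card {1..min i j}" by (rule card_image_le) simp
      finally show False using lt by (simp add: min_def split: if_splits)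
    qed
  qed
qed

lemma Res_inj:
  assumes "young A" "young B" "Res A = Res B"
  shows "A = B"
proof -
  have fA: "finite A" and fB: "finite B" using assms unfolding young_def by auto
  have "card {c \<in> A. content c = d} = card {c \<in> B. content c = d}" for d
    using Res_nth[OF fA, of d] Res_nth[OF fB, of d] assms(3) by simp
  then show ?thesis
    using young_mem_iff[OF assms(1)] young_mem_iff[OF assms(2)] by (auto simp: set_eq_iff)
qed



lemma filter_image: "{c \<in> h ` A. P c} = h ` {c \<in> A. P (h c)}"
  by blast

lemma cnt_transp: "cnt l (transp_diag Y) k = dvec l Y k"
proof -
  have "{c \<in> transp_diag Y. (- content c) mod int l = int k} = (\<lambda>(i, j). (j, i)) ` {c \<in> Y. content c mod int l = int k}"
    unfolding transp_diag_def filter_image content_swap by simp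
  then show ?thesis unfolding cnt_def dvec_def using card_image[OF swap_inj] by simp
qed

lemma cnt_mu:
  assumes l: "l > 0" and mu: "\<mu> \<in> partitions_with_core l (transp_diag \<nu>) (n * l + card \<nu>)" and k: "k < l"
  shows "cnt l \<mu> k = n + dvec l \<nu> k"
proof -
  have hc: "(rim_hook_removal l)\<^sup>*\<^sup>* \<mu> (transp_diag \<nu>)" and cm: "card \<mu> = n * l + card \<nu>"
    using mu unfolding partitions_with_core_def has_core_def by auto
  obtain s where s: "card \<mu> = card (transp_diag \<nu>) + s * l" "\<forall>k<l. cnt l \<mu> k = cnt l (transp_diag \<nu>) k + s"
    using chain_cnt[OF hc l] by blast
  have ct: "card (transp_diag \<nu>) = card \<nu>" by (rule card_transp)
  have "s * l = n * l" using s(1) cm ct by linarith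
  then have "s = n" using l by simp
  then show ?thesis using s(2) k cnt_transp[of l \<nu> k] by simp
qed

theorem proposition9p3:
  fixes l n :: nat and \<nu> :: "(nat \<times> nat) set" and \<theta> :: "nat \<Rightarrow> rat"
  assumes "l > 1"
    and "is_core l \<nu>"
    and "theta_generic l \<theta> (\<lambda>i. n + dvec l \<nu> i)"
  shows "(\<forall>\<mu>\<in>partitions_with_core l (transp_diag \<nu>) (n * l + card \<nu>).
            \<forall>W. is_mu_grading l \<theta> \<mu> W \<longrightarrow> poincare W = Res (transp_diag \<mu>))
       \<and> (\<forall>\<mu>1\<in>partitions_with_core l (transp_diag \<nu>) (n * l + card \<nu>).
          \<forall>\<mu>2\<in>partitions_with_core l (transp_diag \<nu>) (n * l + card \<nu>).
          \<forall>W1 W2. is_mu_grading l \<theta> \<mu>1 W1 \<longrightarrow> is_mu_grading l \<theta> \<mu>2 W2 \<longrightarrow>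
             poincare W1 = poincare W2 \<longrightarrow> \<mu>1 = \<mu>2)"
proof -
  have l: "l > 0" using assms(1) by simp
  have part1: "poincare W = Res (transp_diag \<mu>)"
    if mu: "\<mu> \<in> partitions_with_core l (transp_diag \<nu>) (n * l + card \<nu>)" and g: "is_mu_grading l \<theta> \<mu> W" for \<mu> W
  proof -
    have y: "young \<mu>" using mu unfolding partitions_with_core_def by simp
    interpret yd \<mu> by standard (rule y)
    have cntle: "\<forall>k<l. cnt l \<mu> k \<le> n + dvec l \<nu> k" using cnt_mu[OF l mu] by simp
    interpret gr \<mu> l \<theta> W
    proof
      show "is_mu_grading l \<theta> \<mu> W" by (rule g)
    next
      fix b L assume "b < frob_k \<mu>" "1 \<le> L" "L \<le> mm \<mu> b"
      then show "ISum l \<theta> (- int (mm \<mu> b - rr \<mu> b)) L \<noteq> 0"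
        using generic_interval[OF l assms(3) cntle] by blast
    qed
    show ?thesis using poincare_sum sum_deg_Res by simp
  qed
  show ?thesis
  proof (intro conjI ballI allI impI)
    fix \<mu> W assume "\<mu> \<in> partitions_with_core l (transp_diag \<nu>) (n * l + card \<nu>)" "is_mu_grading l \<theta> \<mu> W"
    then show "poincare W = Res (transp_diag \<mu>)" by (rule part1)
  next
    fix \<mu>1 \<mu>2 W1 W2
    assume m1: "\<mu>1 \<in> partitions_with_core l (transp_diag \<nu>) (n * l + card \<nu>)"
      and m2: "\<mu>2 \<in> partitions_with_core l (transp_diag \<nu>) (n * l + card \<nu>)"
      and g1: "is_mu_grading l \<theta> \<mu>1 W1" and g2: "is_mu_grading l \<theta> \<mu>2 W2"
      and eq: "poincare W1 = poincare W2"
    have "Res (transp_diag \<mu>1) = Res (transp_diag \<mu>2)" using part1[OF m1 g1] part1[OF m2 g2] eq by simp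
    moreover have "young (transp_diag \<mu>1)" "young (transp_diag \<mu>2)"
      using m1 m2 young_transp unfolding partitions_with_core_def by auto
    ultimately have "transp_diag \<mu>1 = transp_diag \<mu>2" using Res_inj by blast
    then show "\<mu>1 = \<mu>2" using transp_transp by metis
  qed
qed


end
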